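(* Suppose $\{X_i:i\in\mathcal I_n\}$ satisfies Assumption 2, $H$ is a degenerate symmetric kernel, and $\delta>0$. Let $J\ge1$ and $\mathbf i=(i_1,k_1,\dots,i_J,k_J)\in\mathcal I_n^{2J}$ with $i_j\ne k_j$ for each $j$. If $\mathbf i$ has an $m$-free index, then $$\Big|E\Big[\prod_{j=1}^JH_{i_jk_j}\Big]\Big|\le 2\,\mathbf H_{J+\delta}^J\,\beta(1,2J-1,m)^{\frac{\delta}{J+\delta}}.$$
   Context: $\mathcal I_n$ is a finite index set with metric $\mathbf d$; $\{X_i\}$ are random vectors in $\mathbb R^d$. $\beta(\mathcal F_1,\mathcal F_2)=\sup\frac12\sum_i\sum_j|P(A_i\cap B_j)-P(A_i)P(B_j)|$ over finite partitions $\{A_i\}\subset\mathcal F_1,\{B_j\}\subset\mathcal F_2$. Assumption 2: for all $n_1,n_2\in\mathbb N\cup\{\infty\}$, $m>0$, $\sup\beta(\sigma(X_i:i\in\mathcal I_1),\sigma(X_i:i\in\mathcal I_2))\le\beta(n_1,n_2,m)$, sup over $\mathcal I_1,\mathcal I_2\subset\mathcal I_n$ with $|\mathcal I_1|\le n_1,|\mathcal I_2|\le n_2$, $\mathbf d(\mathcal I_1,\mathcal I_2)=\min_{i\in\mathcal I_1,j\in\mathcal I_2}\mathbf d(i,j)\ge m$. Degenerate: $EH(X_k,x)=0$ for all $k$ and $x$. $H_{ij}=H(X_i,X_j)$; for $i\ne j$, $\tilde X_j$ has the law of $X_j$ and is independent of $X_i$, $H_{i\tilde j}=H(X_i,\tilde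 X_j)$; $\mathbf H_p=\sup_{i\ne j}\max\{\|H_{ij}\|_p,\|H_{i\tilde j}\|_p\}$. An entry $i_k$ of $\mathbf i=(i_1,\dots,i_q)$ is $m$-free if $\mathbf d(i_k,i_l)>m$ for every other entry $i_l$, $l\ne k$. *)

theory Defs
  imports "HOL-Probability.Probability"
begin

definition is_fin_partition :: "'w set \<Rightarrow> 'w set set \<Rightarrow> 'w set set \<Rightarrow> bool" where
  "is_fin_partition \<Omega> F P \<longleftrightarrow> finite P \<and> P \<subseteq> F \<and> disjoint P \<and> \<Union>P = \<Omega>"

definition beta_coef :: "'w measure \<Rightarrow> 'w set set \<Rightarrow> 'w set set \<Rightarrow> real" where
  "beta_coef M F1 F2 =
     (SUP AB \<in> {(A, B). is_fin_partition (space M) F1 A \<and> is_fin_partition (space M) F2 B}.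
        (1/2) * (\<Sum>a\<in>fst AB. \<Sum>b\<in>snd AB.
                   \<bar>measure M (a \<inter> b) - measure M a * measure M b\<bar>))"

definition gen_sigma :: "'w measure \<Rightarrow> ('i \<Rightarrow> 'w \<Rightarrow> 'b::topological_space) \<Rightarrow> 'i set \<Rightarrow> 'w set set" where
  "gen_sigma M X I = sigma_sets (space M) (\<Union>i\<in>I. {X i -` A \<inter> space M | A. A \<in> sets borel})"

definition Lp_norm :: "'a measure \<Rightarrow> ('a \<Rightarrow> real) \<Rightarrow> real \<Rightarrow> real" where
  "Lp_norm N f p = (\<integral>x. \<bar>f x\<bar> powr p \<partial>N) powr (1 / p)"

text \<open>H_p = sup over i ~= j of max(||H(X_i,X_j)||_p, ||H(X_i, X~_j)||_p), where X~_j is an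
  independent copy of X_j, i.e. (X_i, X~_j) has law P_{X_i} x P_{X_j}.\<close>
definition Hbound :: "'w measure \<Rightarrow> ('i \<Rightarrow> 'w \<Rightarrow> 'b::topological_space) \<Rightarrow> ('b \<Rightarrow> 'b \<Rightarrow> real)
                       \<Rightarrow> 'i set \<Rightarrow> real \<Rightarrow> real" where
  "Hbound M X H I p =
     (SUP ij \<in> {(i, j). i \<in> I \<and> j \<in> I \<and> i \<noteq> j}.
        max (Lp_norm M (\<lambda>\<omega>. H (X (fst ij) \<omega>) (X (snd ij) \<omega>)) p)
            (Lp_norm (distr M borel (X (fst ij)) \<Otimes>\<^sub>M distr M borel (X (snd ij)))
                     (\<lambda>xy. H (fst xy) (snd xy)) p))"

end

theory Submission
  imports Defs
begin

lemma young_pt: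
  fixes g w A B r :: real
  assumes "g \<ge> 0" "w \<ge> 0" "A > 0" "B > 0" "r > 1"
  shows "g * w \<le> A powr (1/r) * B powr (1 - 1/r) *
           ((1/r) * (g powr r * w / A) + (1 - 1/r) * (w / B))"
proof (cases "g = 0 \<or> w = 0")
  case True
  have "0 \<le> A powr (1/r) * B powr (1 - 1/r) *
           ((1/r) * (g powr r * w / A) + (1 - 1/r) * (w / B))"
    using assms by (intro mult_nonneg_nonneg add_nonneg_nonneg) (auto simp: field_simps)
  then show ?thesis using True by auto
next
  case False
  then have gp: "g > 0" and wp: "w > 0" using assms by auto
  have Y: "(g powr r * w / A) powr (1/r) * (w / B) powr (1 - 1/r)
      \<le> (1/r) * (g powr r * w / A) + (1 - 1/r) * (w / B)"
    using assms gp wp by (intro Youngs_inequality_0) (auto simp: field_simps)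
  have "(g powr r * w / A) powr (1/r) = g * w powr (1/r) / A powr (1/r)"
    using assms gp wp by (simp add: powr_divide powr_mult powr_powr)
  moreover have "(w / B) powr (1 - 1/r) = w powr (1 - 1/r) / B powr (1 - 1/r)"
    using assms wp by (simp add: powr_divide)
  moreover have "w powr (1/r) * w powr (1 - 1/r) = w"
    using wp by (simp add: powr_add[symmetric])
  ultimately have "(g powr r * w / A) powr (1/r) * (w / B) powr (1 - 1/r)
      = g * w / (A powr (1/r) * B powr (1 - 1/r))"
    by (simp add: field_simps)
  with Y have "g * w / (A powr (1/r) * B powr (1 - 1/r)) \<le>
       (1/r) * (g powr r * w / A) + (1 - 1/r) * (w / B)" by simp
  moreover have "A powr (1/r) * B powr (1 - 1/r) > 0" using assms by simp
  ultimately show ?thesis by (simp add: divide_le_eq mult.commute)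
qed


lemma holder_w:
  fixes g w :: "'a \<Rightarrow> real"
  assumes [measurable]: "g \<in> borel_measurable N" "w \<in> borel_measurable N"
    and g0: "\<And>x. g x \<ge> 0" and w0: "\<And>x. w x \<ge> 0"
    and i1: "integrable N (\<lambda>x. g x powr r * w x)" and i2: "integrable N w"
    and i3: "integrable N (\<lambda>x. g x * w x)" and r: "r > 1"
  shows "(\<integral>x. g x * w x \<partial>N) \<le> (\<integral>x. g x powr r * w x \<partial>N) powr (1/r) * (\<integral>x. w x \<partial>N) powr (1 - 1/r)"
proof -
  define A where "A = (\<integral>x. g x powr r * w x \<partial>N)"
  define B where "B = (\<integral>x. w x \<partial>N)"
  have A0: "A \<ge> 0" unfolding A_def using g0 w0 by (intro integral_nonneg_AE) auto
  have B0: "B \<ge> 0" unfolding B_def using w0 by (intro integral_nonneg_AE) auto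
  have RHS0: "0 \<le> A powr (1/r) * B powr (1 - 1/r)" by simp
  show ?thesis
  proof (cases "A = 0 \<or> B = 0")
    case True
    have "AE x in N. g x * w x = 0"
    proof (cases "A = 0")
      case True
      then have "AE x in N. g x powr r * w x = 0"
        using i1 g0 w0 unfolding A_def by (subst integral_nonneg_eq_0_iff_AE[symmetric]) auto
      then show ?thesis by eventually_elim auto
    next
      case False
      with True have "B = 0" by auto
      then have "AE x in N. w x = 0"
        using i2 w0 unfolding B_def by (subst integral_nonneg_eq_0_iff_AE[symmetric]) auto
      then show ?thesis by eventually_elim auto
    qed
    then have "(\<integral>x. g x * w x \<partial>N) = 0" by (rule integral_eq_zero_AE)
    then show ?thesis using RHS0 unfolding A_def B_def by simp
  next
    case False
    then have Ap: "A > 0" and Bp: "B > 0" using A0 B0 by auto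
    define C where "C = A powr (1/r) * B powr (1 - 1/r)"
    have "(\<integral>x. g x * w x \<partial>N) \<le>
        (\<integral>x. C * ((1/r) * (g x powr r * w x / A) + (1 - 1/r) * (w x / B)) \<partial>N)"
      unfolding C_def using i1 i2 i3
      by (intro integral_mono young_pt g0 w0 Ap Bp r) auto
    also have "\<dots> = C * ((1/r) * (A / A) + (1 - 1/r) * (B / B))"
      using i1 i2 unfolding A_def B_def by simp
    also have "\<dots> = C" using Ap Bp by (simp add: field_simps)
    finally show ?thesis unfolding C_def A_def B_def .
  qed
qed


lemma berbee:
  fixes P Q :: "'a measure" and f :: "'a \<Rightarrow> real"
  assumes PP: "prob_space P" and QQ: "prob_space Q" and sQ: "sets Q = sets P"
    and bnd: "\<And>C. C \<in> sets P \<Longrightarrow> measure P C - measure Q C \<le> b"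
    and fm[measurable]: "f \<in> borel_measurable P"
    and iP: "integrable P (\<lambda>x. \<bar>f x\<bar> powr r)" and iQ: "integrable Q (\<lambda>x. \<bar>f x\<bar> powr r)"
    and fP: "integrable P f" and fQ: "integrable Q f"
    and VP: "(\<integral>x. \<bar>f x\<bar> powr r \<partial>P) \<le> V" and VQ: "(\<integral>x. \<bar>f x\<bar> powr r \<partial>Q) \<le> V"
    and r: "r > 1"
  shows "\<bar>(\<integral>x. f x \<partial>P) - (\<integral>x. f x \<partial>Q)\<bar> \<le> 2 * V powr (1/r) * b powr (1 - 1/r)"
proof -
  interpret P: prob_space P by fact
  interpret Q: prob_space Q by fact
  have spQ: "space Q = space P" using sQ by (rule sets_eq_imp_space_eq)
  define \<mu> where "\<mu> = measure_of (space P) (sets P) (\<lambda>A. emeasure P A + emeasure Q A)"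
  have sa: "sigma_algebra (space P) (sets P)" by (rule sets.sigma_algebra_axioms)
  have pos: "positive (sets P) (\<lambda>A. emeasure P A + emeasure Q A)"
    unfolding positive_def by simp
  have ca: "countably_additive (sets P) (\<lambda>A. emeasure P A + emeasure Q A)"
    unfolding countably_additive_def
  proof (intro allI impI)
    fix A :: "nat \<Rightarrow> 'a set" assume A: "range A \<subseteq> sets P" "disjoint_family A"
    then have AQ: "range A \<subseteq> sets Q" using sQ by simp
    have "(\<Sum>i. emeasure P (A i) + emeasure Q (A i)) = (\<Sum>i. emeasure P (A i)) + (\<Sum>i. emeasure Q (A i))"
      by (rule suminf_add[symmetric]) auto
    also have "\<dots> = emeasure P (\<Union>i. A i) + emeasure Q (\<Union>i. A i)"
      using A AQ by (simp add: suminf_emeasure)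
    finally show "(\<Sum>i. emeasure P (A i) + emeasure Q (A i)) = emeasure P (\<Union>i. A i) + emeasure Q (\<Union>i. A i)" .
  qed
  have s\<mu>: "sets \<mu> = sets P" unfolding \<mu>_def by (simp add: sets.space_closed)
  have sp\<mu>: "space \<mu> = space P" unfolding \<mu>_def by simp
  have em\<mu>: "emeasure \<mu> A = emeasure P A + emeasure Q A" if "A \<in> sets P" for A
    unfolding \<mu>_def using sa pos ca that by (rule emeasure_measure_of_sigma)
  have fin: "finite_measure \<mu>"
    by (rule finite_measureI) (simp add: sp\<mu> em\<mu> P.emeasure_space_1 Q.emeasure_space_1[unfolded spQ])
  interpret mu: finite_measure \<mu> by fact
  have acP: "absolutely_continuous \<mu> P"
    unfolding absolutely_continuous_def null_sets_def using em\<mu> s\<mu> by auto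
  have acQ: "absolutely_continuous \<mu> Q"
    unfolding absolutely_continuous_def null_sets_def using em\<mu> s\<mu> sQ by auto
  have sP': "sets P = sets \<mu>" using s\<mu> by simp
  have sQ': "sets Q = sets \<mu>" using s\<mu> sQ by simp
  have sfP: "sigma_finite_measure P" by unfold_locales
  have sfQ: "sigma_finite_measure Q" by unfold_locales
  have meq: "measurable \<mu> = measurable P" by (rule ext measurable_cong_sets[OF s\<mu> refl])+
  have fm': "f \<in> borel_measurable \<mu>" using fm by (simp add: measurable_cong_sets[OF s\<mu> refl])
  define p where "p x = enn2real (RN_deriv \<mu> P x)" for x
  define q where "q x = enn2real (RN_deriv \<mu> Q x)" for x
  have pm[measurable]: "p \<in> borel_measurable \<mu>" unfolding p_def by measurable
  have qm[measurable]: "q \<in> borel_measurable \<mu>" unfolding q_def by measurable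
  have p0: "p x \<ge> 0" "q x \<ge> 0" for x unfolding p_def q_def by auto
  note RNP = mu.RN_deriv_integrable[OF sfP acP sP'] mu.RN_deriv_integral[OF sfP acP sP']
  note RNQ = mu.RN_deriv_integrable[OF sfQ acQ sQ'] mu.RN_deriv_integral[OF sfQ acQ sQ']
  have F1: "integrable \<mu> (\<lambda>x. p x * f x)" "(\<integral>x. f x \<partial>P) = (\<integral>x. p x * f x \<partial>\<mu>)"
    using RNP[OF fm'] fP unfolding p_def by auto
  have F2: "integrable \<mu> (\<lambda>x. q x * f x)" "(\<integral>x. f x \<partial>Q) = (\<integral>x. q x * f x \<partial>\<mu>)"
    using RNQ[OF fm'] fQ unfolding q_def by auto
  have frm: "(\<lambda>x. \<bar>f x\<bar> powr r) \<in> borel_measurable \<mu>" using fm' by measurable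
  have G1: "integrable \<mu> (\<lambda>x. p x * \<bar>f x\<bar> powr r)" "(\<integral>x. \<bar>f x\<bar> powr r \<partial>P) = (\<integral>x. p x * \<bar>f x\<bar> powr r \<partial>\<mu>)"
    using RNP[OF frm] iP unfolding p_def by auto
  have G2: "integrable \<mu> (\<lambda>x. q x * \<bar>f x\<bar> powr r)" "(\<integral>x. \<bar>f x\<bar> powr r \<partial>Q) = (\<integral>x. q x * \<bar>f x\<bar> powr r \<partial>\<mu>)"
    using RNQ[OF frm] iQ unfolding q_def by auto
  have one: "(\<lambda>x. 1::real) \<in> borel_measurable \<mu>" by simp
  have H1: "integrable \<mu> p" "(\<integral>x. p x \<partial>\<mu>) = 1"
    using RNP[OF one] P.prob_space unfolding p_def by auto
  have H2: "integrable \<mu> q" "(\<integral>x. q x \<partial>\<mu>) = 1"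
    using RNQ[OF one] Q.prob_space unfolding q_def by auto
  define E where "E = {x \<in> space \<mu>. q x < p x}"
  have Em[measurable]: "E \<in> sets \<mu>" unfolding E_def by measurable
  have EP: "E \<in> sets P" using Em s\<mu> by simp
  have im: "(indicator E :: 'a \<Rightarrow> real) \<in> borel_measurable \<mu>" by measurable
  have K1: "integrable \<mu> (\<lambda>x. p x * indicator E x)" "measure P E = (\<integral>x. p x * indicator E x \<partial>\<mu>)"
    using RNP[OF im] EP sets.sets_into_space[OF EP] unfolding p_def
    by (auto simp: Int_absorb2 P.emeasure_finite less_top[symmetric])
  have K2: "integrable \<mu> (\<lambda>x. q x * indicator E x)" "measure Q E = (\<integral>x. q x * indicator E x \<partial>\<mu>)"
    using RNQ[OF im] EP sets.sets_into_space[OF EP] sQ spQ unfolding q_def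
    by (auto simp: Int_absorb2 Q.emeasure_finite less_top[symmetric])
  define w where "w x = \<bar>p x - q x\<bar>" for x
  have wm[measurable]: "w \<in> borel_measurable \<mu>" unfolding w_def by measurable
  have weq: "w x = 2 * (p x * indicator E x) - 2 * (q x * indicator E x) - p x + q x" if "x \<in> space \<mu>" for x
    using that unfolding w_def E_def by (auto simp: indicator_def)
  have wint: "integrable \<mu> w"
  proof -
    have "integrable \<mu> (\<lambda>x. 2 * (p x * indicator E x) - 2 * (q x * indicator E x) - p x + q x)"
      using K1 K2 H1 H2 by auto
    then show ?thesis using Bochner_Integration.integrable_cong[OF refl weq, of \<mu>] by simp
  qed
  have wI: "(\<integral>x. w x \<partial>\<mu>) = 2 * measure P E - 2 * measure Q E"
    by (subst Bochner_Integration.integral_cong[OF refl weq]) (use K1 K2 H1 H2 in auto)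
  have b0: "0 \<le> b" using bnd[of "space P"] P.prob_space Q.prob_space spQ by simp
  have wB: "(\<integral>x. w x \<partial>\<mu>) \<le> 2 * b" using wI bnd[OF EP] by simp
  have V0: "0 \<le> V" using VP by (smt (verit) integral_nonneg_AE AE_I2 powr_ge_zero)
  have pq: "c * \<bar>p x - q x\<bar> \<le> p x * c + q x * c" if "c \<ge> 0" for c x
  proof -
    have "\<bar>p x - q x\<bar> \<le> p x + q x" using p0[of x] by auto
    then have "c * \<bar>p x - q x\<bar> \<le> c * (p x + q x)" using that by (rule mult_left_mono)
    then show ?thesis by (simp add: algebra_simps)
  qed
  have i1: "integrable \<mu> (\<lambda>x. \<bar>f x\<bar> powr r * w x)"
    by (rule Bochner_Integration.integrable_bound[OF Bochner_Integration.integrable_add[OF G1(1) G2(1)]])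
       (use fm' wm in \<open>measurable\<close>, auto simp: w_def p0 intro!: AE_I2 pq)
  have i3: "integrable \<mu> (\<lambda>x. \<bar>f x\<bar> * w x)"
    by (rule Bochner_Integration.integrable_bound[OF Bochner_Integration.integrable_add[OF Bochner_Integration.integrable_abs[OF F1(1)] Bochner_Integration.integrable_abs[OF F2(1)]]])
       (use fm' wm in \<open>measurable\<close>, auto simp: w_def p0 abs_mult intro!: AE_I2 pq)
  have "\<bar>(\<integral>x. f x \<partial>P) - (\<integral>x. f x \<partial>Q)\<bar> = \<bar>\<integral>x. p x * f x - q x * f x \<partial>\<mu>\<bar>"
    using F1 F2 by simp
  also have "\<dots> \<le> (\<integral>x. \<bar>f x\<bar> * w x \<partial>\<mu>)"
  proof -
    have "(\<lambda>x. \<bar>p x * f x - q x * f x\<bar>) = (\<lambda>x. \<bar>f x\<bar> * w x)"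
      by (auto simp: w_def abs_mult[symmetric] right_diff_distrib mult.commute)
    then show ?thesis using integral_abs_bound[of \<mu> "\<lambda>x. p x * f x - q x * f x"] by simp
  qed
  also have "\<dots> \<le> (\<integral>x. \<bar>f x\<bar> powr r * w x \<partial>\<mu>) powr (1/r) * (\<integral>x. w x \<partial>\<mu>) powr (1 - 1/r)"
    by (rule holder_w) (use i1 i3 wint r fm' wm in \<open>auto simp: w_def[abs_def]\<close>)
  also have "\<dots> \<le> (2 * V) powr (1/r) * (2 * b) powr (1 - 1/r)"
  proof (intro mult_mono powr_mono2)
    have "(\<integral>x. \<bar>f x\<bar> powr r * w x \<partial>\<mu>) \<le> (\<integral>x. p x * \<bar>f x\<bar> powr r + q x * \<bar>f x\<bar> powr r \<partial>\<mu>)"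
      by (rule integral_mono) (use i1 G1 G2 in \<open>auto simp: w_def intro!: pq\<close>)
    also have "\<dots> \<le> 2 * V" using G1 G2 VP VQ by simp
    finally show "(\<integral>x. \<bar>f x\<bar> powr r * w x \<partial>\<mu>) \<le> 2 * V" .
    show "0 \<le> (\<integral>x. \<bar>f x\<bar> powr r * w x \<partial>\<mu>)"
      by (intro integral_nonneg_AE AE_I2) (auto simp: w_def)
    show "0 \<le> (\<integral>x. w x \<partial>\<mu>)" by (intro integral_nonneg_AE AE_I2) (auto simp: w_def)
  qed (use wB r in auto)
  also have "\<dots> = 2 * V powr (1/r) * b powr (1 - 1/r)"
    using V0 b0 by (simp add: powr_mult powr_add[symmetric])
  finally show ?thesis .
qed


definition sdiff :: "'a set \<Rightarrow> 'a set \<Rightarrow> 'a set" where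
  "sdiff X Y = (X - Y) \<union> (Y - X)"

lemma approx_sigma:
  fixes L1 L2 :: "'a measure" and E G :: "'a set set"
  assumes L1: "finite_measure L1" and L2: "finite_measure L2"
    and sp: "space L1 = \<Omega>" "space L2 = \<Omega>"
    and s1: "sets L1 = sigma_sets \<Omega> E" and s2: "sets L2 = sigma_sets \<Omega> E"
    and EG: "E \<subseteq> G" and Gs: "G \<subseteq> sigma_sets \<Omega> E"
    and Ge: "{} \<in> G" and Gu: "\<And>a b. a \<in> G \<Longrightarrow> b \<in> G \<Longrightarrow> a \<union> b \<in> G"
    and Gc: "\<And>a. a \<in> G \<Longrightarrow> \<Omega> - a \<in> G"
    and C: "C \<in> sigma_sets \<Omega> E"
  shows "\<forall>\<epsilon>>0. \<exists>R\<in>G. measure L1 (sdiff C R) + measure L2 (sdiff C R) < \<epsilon>"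
  using C
proof (induction rule: sigma_sets.induct)
  interpret L1: finite_measure L1 by fact
  interpret L2: finite_measure L2 by fact
  case (Basic a)
  then show ?case using EG by (intro allI impI bexI[of _ a]) (auto simp: sdiff_def)
next
  case Empty
  then show ?case using Ge by (intro allI impI bexI[of _ "{}"]) (auto simp: sdiff_def)
next
  interpret L1: finite_measure L1 by fact
  interpret L2: finite_measure L2 by fact
  case (Compl a)
  show ?case
  proof (intro allI impI)
    fix \<epsilon> :: real assume "\<epsilon> > 0"
    with Compl.IH obtain R where R: "R \<in> G" "measure L1 (sdiff a R) + measure L2 (sdiff a R) < \<epsilon>" by blast
    have Rs: "R \<in> sigma_sets \<Omega> E" using R Gs by auto
    have sub: "sdiff (\<Omega> - a) (\<Omega> - R) \<subseteq> sdiff a R" by (auto simp: sdiff_def)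
    have ms: "sdiff a R \<in> sigma_sets \<Omega> E" unfolding sdiff_def
      using Compl.hyps Rs s1[symmetric] by auto
    have "measure L1 (sdiff (\<Omega> - a) (\<Omega> - R)) \<le> measure L1 (sdiff a R)"
      using ms sub s1 by (intro L1.finite_measure_mono) auto
    moreover have "measure L2 (sdiff (\<Omega> - a) (\<Omega> - R)) \<le> measure L2 (sdiff a R)"
      using ms sub s2 by (intro L2.finite_measure_mono) auto
    ultimately show "\<exists>R\<in>G. measure L1 (sdiff (\<Omega> - a) R) + measure L2 (sdiff (\<Omega> - a) R) < \<epsilon>"
      using R Gc by (intro bexI[of _ "\<Omega> - R"]) auto
  qed
next
  interpret L1: finite_measure L1 by fact
  interpret L2: finite_measure L2 by fact
  case (Union A)
  show ?case
  proof (intro allI impI)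
    fix \<epsilon> :: real assume ep: "\<epsilon> > 0"
    define B where "B N = (\<Union>i<N. A i)" for N
    have As: "A i \<in> sets L1" for i using Union.hyps s1 by auto
    have Bs: "B N \<in> sets L1" for N unfolding B_def using As by auto
    have Cs: "(\<Union>i. A i) \<in> sets L1" using As by auto
    have inc: "incseq B" unfolding B_def incseq_def by (auto intro: less_le_trans)
    have BU: "(\<Union>N. B N) = (\<Union>i. A i)" unfolding B_def by auto
    have l1: "(\<lambda>N. measure L1 (B N)) \<longlonglongrightarrow> measure L1 (\<Union>i. A i)"
      using L1.finite_Lim_measure_incseq[OF _ inc] Bs BU by auto
    have l2: "(\<lambda>N. measure L2 (B N)) \<longlonglongrightarrow> measure L2 (\<Union>i. A i)"
      using L2.finite_Lim_measure_incseq[OF _ inc] Bs BU s1 s2 by auto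
    have "eventually (\<lambda>N. measure L1 (\<Union>i. A i) - \<epsilon>/4 < measure L1 (B N)) sequentially"
      using ep by (intro order_tendstoD(1)[OF l1]) auto
    moreover have "eventually (\<lambda>N. measure L2 (\<Union>i. A i) - \<epsilon>/4 < measure L2 (B N)) sequentially"
      using ep by (intro order_tendstoD(1)[OF l2]) auto
    moreover have "eventually (\<lambda>N. N \<ge> 1) sequentially" by (rule eventually_ge_at_top)
    ultimately have "eventually (\<lambda>N. measure L1 (\<Union>i. A i) - \<epsilon>/4 < measure L1 (B N) \<and>
       measure L2 (\<Union>i. A i) - \<epsilon>/4 < measure L2 (B N) \<and> N \<ge> 1) sequentially"
      by eventually_elim auto
    then obtain N where N: "measure L1 (\<Union>i. A i) - \<epsilon>/4 < measure L1 (B N)"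
      "measure L2 (\<Union>i. A i) - \<epsilon>/4 < measure L2 (B N)" "N \<ge> 1"
      by (auto simp: eventually_sequentially)
    have "\<forall>i. \<exists>R. R \<in> G \<and> measure L1 (sdiff (A i) R) + measure L2 (sdiff (A i) R) < \<epsilon> / (2 * N)"
    proof
      fix i
      have "\<epsilon> / (2 * N) > 0" using ep N(3) by simp
      then show "\<exists>R. R \<in> G \<and> measure L1 (sdiff (A i) R) + measure L2 (sdiff (A i) R) < \<epsilon> / (2 * N)"
        using Union.IH[of i] by blast
    qed
    then obtain RR where RR: "\<And>i. RR i \<in> G" "\<And>i. measure L1 (sdiff (A i) (RR i)) + measure L2 (sdiff (A i) (RR i)) < \<epsilon> / (2 * N)"
      by metis
    define R where "R = (\<Union>i<N. RR i)"
    have RG: "(\<Union>i<n. RR i) \<in> G" for n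
      by (induction n) (auto simp: lessThan_Suc Ge intro: Gu RR(1))
    have RRs: "RR i \<in> sets L1" for i using RR(1) Gs s1 by auto
    have sub: "sdiff (\<Union>i. A i) R \<subseteq> ((\<Union>i. A i) - B N) \<union> (\<Union>i<N. sdiff (A i) (RR i))"
      unfolding sdiff_def R_def B_def by auto
    have sds: "sdiff (A i) (RR i) \<in> sets L1" for i unfolding sdiff_def using As RRs by auto
    have m1: "measure L1 (sdiff (\<Union>i. A i) R) \<le> measure L1 ((\<Union>i. A i) - B N) + (\<Sum>i<N. measure L1 (sdiff (A i) (RR i)))"
    proof -
      have "measure L1 (sdiff (\<Union>i. A i) R) \<le> measure L1 (((\<Union>i. A i) - B N) \<union> (\<Union>i<N. sdiff (A i) (RR i)))"
        using sub sds Cs Bs by (intro L1.finite_measure_mono) auto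
      also have "\<dots> \<le> measure L1 ((\<Union>i. A i) - B N) + measure L1 (\<Union>i<N. sdiff (A i) (RR i))"
        using sds Cs Bs by (intro measure_Un_le) auto
      also have "measure L1 (\<Union>i<N. sdiff (A i) (RR i)) \<le> (\<Sum>i<N. measure L1 (sdiff (A i) (RR i)))"
        using sds by (intro measure_subadditive_finite) (auto simp: L1.emeasure_finite)
      finally show ?thesis by simp
    qed
    have sds2: "sdiff (A i) (RR i) \<in> sets L2" for i using sds s1 s2 by auto
    have Cs2: "(\<Union>i. A i) \<in> sets L2" and Bs2: "B N \<in> sets L2" using Cs Bs s1 s2 by auto
    have m2: "measure L2 (sdiff (\<Union>i. A i) R) \<le> measure L2 ((\<Union>i. A i) - B N) + (\<Sum>i<N. measure L2 (sdiff (A i) (RR i)))"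
    proof -
      have "measure L2 (sdiff (\<Union>i. A i) R) \<le> measure L2 (((\<Union>i. A i) - B N) \<union> (\<Union>i<N. sdiff (A i) (RR i)))"
        using sub sds2 Cs2 Bs2 by (intro L2.finite_measure_mono) auto
      also have "\<dots> \<le> measure L2 ((\<Union>i. A i) - B N) + measure L2 (\<Union>i<N. sdiff (A i) (RR i))"
        using sds2 Cs2 Bs2 by (intro measure_Un_le) auto
      also have "measure L2 (\<Union>i<N. sdiff (A i) (RR i)) \<le> (\<Sum>i<N. measure L2 (sdiff (A i) (RR i)))"
        using sds2 by (intro measure_subadditive_finite) (auto simp: L2.emeasure_finite)
      finally show ?thesis by simp
    qed
    have BC: "B N \<subseteq> (\<Union>i. A i)" unfolding B_def by auto
    have d1: "measure L1 ((\<Union>i. A i) - B N) = measure L1 (\<Union>i. A i) - measure L1 (B N)"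
      using Cs Bs BC by (intro L1.finite_measure_Diff) auto
    have d2: "measure L2 ((\<Union>i. A i) - B N) = measure L2 (\<Union>i. A i) - measure L2 (B N)"
      using Cs2 Bs2 BC by (intro L2.finite_measure_Diff) auto
    have "(\<Sum>i<N. measure L1 (sdiff (A i) (RR i))) + (\<Sum>i<N. measure L2 (sdiff (A i) (RR i)))
        = (\<Sum>i<N. measure L1 (sdiff (A i) (RR i)) + measure L2 (sdiff (A i) (RR i)))"
      by (simp add: sum.distrib)
    also have "\<dots> < (\<Sum>i<N. \<epsilon> / (2 * N))"
      using N(3) RR(2) by (intro sum_strict_mono) (auto simp: lessThan_empty_iff)
    also have "\<dots> = \<epsilon> / 2" using N(3) by simp
    finally have "(\<Sum>i<N. measure L1 (sdiff (A i) (RR i))) + (\<Sum>i<N. measure L2 (sdiff (A i) (RR i))) < \<epsilon>/2" .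
    then have "measure L1 (sdiff (\<Union>i. A i) R) + measure L2 (sdiff (\<Union>i. A i) R) < \<epsilon>"
      using m1 m2 d1 d2 N(1,2) by linarith
    moreover have "R \<in> G" unfolding R_def by (rule RG)
    ultimately show "\<exists>R\<in>G. measure L1 (sdiff (\<Union>i. A i) R) + measure L2 (sdiff (\<Union>i. A i) R) < \<epsilon>"
      by blast
  qed
qed


lemma part_sum_inter:
  assumes "prob_space M" "is_fin_partition (space M) F Pb" "F \<subseteq> sets M" "a \<in> sets M"
  shows "(\<Sum>b\<in>Pb. measure M (a \<inter> b)) = measure M a"
proof -
  interpret prob_space M by fact
  have P: "finite Pb" "Pb \<subseteq> F" "disjoint Pb" "\<Union>Pb = space M"
    using assms(2) unfolding is_fin_partition_def by auto
  have "measure M (\<Union>b\<in>Pb. a \<inter> b) = (\<Sum>b\<in>Pb. measure M (a \<inter> b))"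
    using P assms(3,4) by (intro finite_measure_finite_Union)
      (auto simp: disjoint_family_on_def disjoint_def)
  moreover have "(\<Union>b\<in>Pb. a \<inter> b) = a"
    using P sets.sets_into_space[OF assms(4)] by auto
  ultimately show ?thesis by simp
qed

lemma part_sum:
  assumes "prob_space M" "is_fin_partition (space M) F Pb" "F \<subseteq> sets M"
  shows "(\<Sum>b\<in>Pb. measure M b) = 1"
proof -
  have "\<And>b. b \<in> Pb \<Longrightarrow> space M \<inter> b = b" using assms(2) unfolding is_fin_partition_def by auto
  then show ?thesis
    using part_sum_inter[OF assms sets.top] prob_space.prob_space[OF assms(1)] by simp
qed

lemma beta_sum_le2:
  assumes "prob_space M" "is_fin_partition (space M) F1 Pa" "F1 \<subseteq> sets M"
    "is_fin_partition (space M) F2 Pb" "F2 \<subseteq> sets M"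
  shows "(\<Sum>a\<in>Pa. \<Sum>b\<in>Pb. \<bar>measure M (a \<inter> b) - measure M a * measure M b\<bar>) \<le> 2"
proof -
  have Pa: "finite Pa" "Pa \<subseteq> F1" using assms(2) unfolding is_fin_partition_def by auto
  have "(\<Sum>a\<in>Pa. \<Sum>b\<in>Pb. \<bar>measure M (a \<inter> b) - measure M a * measure M b\<bar>)
      \<le> (\<Sum>a\<in>Pa. \<Sum>b\<in>Pb. measure M (a \<inter> b) + measure M a * measure M b)"
    by (intro sum_mono abs_triangle_ineq4[THEN order_trans]) auto
  also have "\<dots> = (\<Sum>a\<in>Pa. measure M a + measure M a * (\<Sum>b\<in>Pb. measure M b))"
    using Pa assms by (intro sum.cong refl) (auto simp: sum.distrib sum_distrib_left part_sum_inter)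
  also have "\<dots> = (\<Sum>a\<in>Pa. 2 * measure M a)"
    using part_sum[OF assms(1,4,5)] by simp
  also have "\<dots> = 2" using part_sum[OF assms(1,2,3)] by (simp add: sum_distrib_left[symmetric])
  finally show ?thesis .
qed

lemma beta_le:
  assumes "prob_space M" "is_fin_partition (space M) F1 Pa" "F1 \<subseteq> sets M"
    "is_fin_partition (space M) F2 Pb" "F2 \<subseteq> sets M"
  shows "(1/2) * (\<Sum>a\<in>Pa. \<Sum>b\<in>Pb. \<bar>measure M (a \<inter> b) - measure M a * measure M b\<bar>) \<le> beta_coef M F1 F2"
  unfolding beta_coef_def
proof (rule cSUP_upper2[where x="(Pa, Pb)"])
  show "bdd_above ((\<lambda>AB. 1 / 2 * (\<Sum>a\<in>fst AB. \<Sum>b\<in>snd AB. \<bar>measure M (a \<inter> b) - measure M a * measure M b\<bar>)) `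
    {(A, B). is_fin_partition (space M) F1 A \<and> is_fin_partition (space M) F2 B})"
    by (rule bdd_aboveI[of _ 1]) (use assms beta_sum_le2 in fastforce)
qed (use assms in auto)


locale twoalg =
  fixes M :: "'w measure" and F1 F2 :: "'w set set"
  assumes prob: "prob_space M"
    and sa1: "sigma_algebra (space M) F1" and sub1: "F1 \<subseteq> sets M"
    and sa2: "sigma_algebra (space M) F2" and sub2: "F2 \<subseteq> sets M"
begin

definition "M1 = measure_of (space M) F1 (emeasure M)"
definition "M2 = measure_of (space M) F2 (emeasure M)"
definition "Qm = M1 \<Otimes>\<^sub>M M2"
definition "Pm = distr M Qm (\<lambda>\<omega>. (\<omega>, \<omega>))"

lemma restr_facts:
  assumes sa: "sigma_algebra (space M) F" and sub: "F \<subseteq> sets M"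
  shows "sets (measure_of (space M) F (emeasure M)) = F"
    "space (measure_of (space M) F (emeasure M)) = space M"
    "\<And>A. A \<in> F \<Longrightarrow> emeasure (measure_of (space M) F (emeasure M)) A = emeasure M A"
    "prob_space (measure_of (space M) F (emeasure M))"
proof -
  interpret sigma_algebra "space M" F by fact
  interpret P: prob_space M by (rule prob)
  show S: "sets (measure_of (space M) F (emeasure M)) = F"
    using space_closed by (simp add: sigma_sets_eq)
  show SP: "space (measure_of (space M) F (emeasure M)) = space M" by simp
  have pos: "positive F (emeasure M)" unfolding positive_def by simp
  have ca: "countably_additive F (emeasure M)"
    using emeasure_countably_additive[of M] sub unfolding countably_additive_def by blast
  show E: "emeasure (measure_of (space M) F (emeasure M)) A = emeasure M A" if "A \<in> F" for A
    by (rule emeasure_measure_of_sigma[OF sa pos ca that])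
  show "prob_space (measure_of (space M) F (emeasure M))"
    by (rule prob_spaceI) (simp add: E SP top P.emeasure_space_1)
qed

lemma M1_facts: "sets M1 = F1" "space M1 = space M" "\<And>A. A \<in> F1 \<Longrightarrow> emeasure M1 A = emeasure M A"
  "prob_space M1"
  unfolding M1_def using restr_facts[OF sa1 sub1] by auto

lemma M2_facts: "sets M2 = F2" "space M2 = space M" "\<And>A. A \<in> F2 \<Longrightarrow> emeasure M2 A = emeasure M A"
  "prob_space M2"
  unfolding M2_def using restr_facts[OF sa2 sub2] by auto

lemma measure_M1: "A \<in> F1 \<Longrightarrow> measure M1 A = measure M A"
  by (simp add: measure_def M1_facts)
lemma measure_M2: "A \<in> F2 \<Longrightarrow> measure M2 A = measure M A"
  by (simp add: measure_def M2_facts)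

lemma id_M1: "(\<lambda>x. x) \<in> measurable M M1"
  unfolding measurable_def using M1_facts(1,2) sub1 sets.sets_into_space
  by (auto simp: Int_absorb2)
lemma id_M2: "(\<lambda>x. x) \<in> measurable M M2"
  unfolding measurable_def using M2_facts(1,2) sub2 sets.sets_into_space
  by (auto simp: Int_absorb2)

lemma diag_meas: "(\<lambda>\<omega>. (\<omega>, \<omega>)) \<in> measurable M Qm"
  unfolding Qm_def by (rule measurable_Pair[OF id_M1 id_M2])

lemma prob_Qm: "prob_space Qm"
  unfolding Qm_def by (rule prob_space_pair[OF M1_facts(4) M2_facts(4)])

lemma prob_Pm: "prob_space Pm"
  unfolding Pm_def by (rule prob_space.prob_space_distr[OF prob diag_meas])

lemma sets_Pm: "sets Pm = sets Qm" unfolding Pm_def by simp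

lemma space_Qm: "space Qm = space M \<times> space M"
  unfolding Qm_def by (simp add: space_pair_measure M1_facts M2_facts)

lemma sets_Qm: "sets Qm = sigma_sets (space M \<times> space M) {a \<times> b | a b. a \<in> F1 \<and> b \<in> F2}"
  unfolding Qm_def by (simp add: sets_pair_measure M1_facts M2_facts)

lemma measure_Qm_Times: "a \<in> F1 \<Longrightarrow> b \<in> F2 \<Longrightarrow> measure Qm (a \<times> b) = measure M a * measure M b"
proof -
  assume ab: "a \<in> F1" "b \<in> F2"
  interpret M2: prob_space M2 by (rule M2_facts(4))
  have "emeasure Qm (a \<times> b) = emeasure M1 a * emeasure M2 b"
    unfolding Qm_def using ab by (intro M2.emeasure_pair_measure_Times) (auto simp: M1_facts M2_facts)
  then show ?thesis using ab
    by (simp add: measure_def M1_facts M2_facts enn2real_mult)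
qed

lemma measure_Pm: "C \<in> sets Qm \<Longrightarrow> measure Pm C = measure M {\<omega> \<in> space M. (\<omega>, \<omega>) \<in> C}"
  unfolding Pm_def by (subst measure_distr[OF diag_meas]) (auto intro: arg_cong[where f="measure M"])

lemma measure_Pm_Times: "a \<in> F1 \<Longrightarrow> b \<in> F2 \<Longrightarrow> measure Pm (a \<times> b) = measure M (a \<inter> b)"
proof -
  assume ab: "a \<in> F1" "b \<in> F2"
  then have "a \<times> b \<in> sets Qm" unfolding Qm_def by (auto simp: M1_facts M2_facts)
  moreover have "{\<omega> \<in> space M. (\<omega>, \<omega>) \<in> a \<times> b} = a \<inter> b"
    using ab sub1 sets.sets_into_space by auto
  ultimately show ?thesis by (simp add: measure_Pm)
qed

end

context twoalg begin

lemma atoms_partition: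
  fixes n :: nat and A :: "nat \<Rightarrow> 'w set" and F :: "'w set set"
  assumes sa: "sigma_algebra (space M) F" and sub: "F \<subseteq> sets M" and AF: "\<forall>k<n. A k \<in> F"
  defines "\<alpha> \<equiv> \<lambda>T. {x \<in> space M. \<forall>k<n. x \<in> A k \<longleftrightarrow> k \<in> T}"
  shows "is_fin_partition (space M) F (\<alpha> ` Pow {..<n})"
    and "\<And>T. \<alpha> T \<in> F"
proof -
  interpret sigma_algebra "space M" F by fact
  show aF: "\<alpha> T \<in> F" for T
  proof -
    have "\<alpha> T = space M - (\<Union>k\<in>{..<n}. (if k \<in> T then space M - A k else A k))"
      unfolding \<alpha>_def using AF sub sets.sets_into_space by (auto split: if_splits)
    also have "\<dots> \<in> F" using AF by (intro compl_sets finite_UN) auto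
    finally show ?thesis .
  qed
  show "is_fin_partition (space M) F (\<alpha> ` Pow {..<n})"
    unfolding is_fin_partition_def
  proof (intro conjI)
    show "finite (\<alpha> ` Pow {..<n})" by simp
    show "\<alpha> ` Pow {..<n} \<subseteq> F" using aF by auto
    show "disjoint (\<alpha> ` Pow {..<n})"
      unfolding disjoint_def
    proof (intro ballI impI)
      fix a b assume ab: "a \<in> \<alpha> ` Pow {..<n}" "b \<in> \<alpha> ` Pow {..<n}" "a \<noteq> b"
      then obtain T T' where T: "T \<subseteq> {..<n}" "T' \<subseteq> {..<n}" "a = \<alpha> T" "b = \<alpha> T'" by auto
      show "a \<inter> b = {}"
      proof (rule ccontr)
        assume "a \<inter> b \<noteq> {}"
        then obtain x where "x \<in> \<alpha> T" "x \<in> \<alpha> T'" using T by auto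
        then have "T = T'" using T(1,2) unfolding \<alpha>_def by auto
        then show False using ab T by auto
      qed
    qed
    show "\<Union> (\<alpha> ` Pow {..<n}) = space M"
    proof
      show "\<Union> (\<alpha> ` Pow {..<n}) \<subseteq> space M" unfolding \<alpha>_def by auto
      show "space M \<subseteq> \<Union> (\<alpha> ` Pow {..<n})"
      proof
        fix x assume "x \<in> space M"
        then have "x \<in> \<alpha> {k. k < n \<and> x \<in> A k}" unfolding \<alpha>_def by auto
        then show "x \<in> \<Union> (\<alpha> ` Pow {..<n})" by auto
      qed
    qed
  qed
qed

lemma cells_union:
  assumes P1: "is_fin_partition (space M) F1 P1" and P2: "is_fin_partition (space M) F2 P2"
    and S: "S \<subseteq> P1 \<times> P2" and L: "L = Pm \<or> L = Qm"
  shows "measure L (\<Union>p\<in>S. fst p \<times> snd p) = (\<Sum>p\<in>S. measure L (fst p \<times> snd p))"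
proof -
  have fin: "finite P1" "finite P2" "P1 \<subseteq> F1" "P2 \<subseteq> F2" "disjoint P1" "disjoint P2"
    using P1 P2 unfolding is_fin_partition_def by auto
  have finL: "finite_measure L" using L prob_Pm prob_Qm by (auto intro: prob_space.finite_measure)
  have sL: "sets L = sets Qm" using L sets_Pm by auto
  have "finite S" using S fin by (auto intro: finite_subset)
  moreover have "(\<lambda>p. fst p \<times> snd p) ` S \<subseteq> sets L"
  proof
    fix z assume "z \<in> (\<lambda>p. fst p \<times> snd p) ` S"
    then obtain p where p: "p \<in> S" "z = fst p \<times> snd p" by blast
    have "fst p \<in> P1" "snd p \<in> P2" using subsetD[OF S p(1)] by (cases p, auto)+
    then have "fst p \<in> F1" "snd p \<in> F2" using fin(3,4) by auto
    with p obtain a b where "z = a \<times> b" "a \<in> F1" "b \<in> F2" by blast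
    then show "z \<in> sets L" using sL unfolding Qm_def by (auto simp: M1_facts M2_facts)
  qed
  moreover have "disjoint_family_on (\<lambda>p. fst p \<times> snd p) S"
    unfolding disjoint_family_on_def
  proof (intro ballI impI)
    fix p q assume pq: "p \<in> S" "q \<in> S" "p \<noteq> q"
    then have "fst p \<noteq> fst q \<or> snd p \<noteq> snd q" by (auto simp: prod_eq_iff)
    moreover have "fst p \<in> P1" "snd p \<in> P2" "fst q \<in> P1" "snd q \<in> P2"
      using subsetD[OF S pq(1)] subsetD[OF S pq(2)] by (cases p, cases q, auto)+
    ultimately have "fst p \<inter> fst q = {} \<or> snd p \<inter> snd q = {}"
      using fin(5,6) unfolding disjoint_def by blast
    then show "(fst p \<times> snd p) \<inter> (fst q \<times> snd q) = {}" by auto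
  qed
  ultimately show ?thesis by (rule finite_measure.finite_measure_finite_Union[OF finL])
qed

lemma rect_bound:
  fixes n :: nat and A B :: "nat \<Rightarrow> 'w set"
  assumes AB: "\<forall>k<n. A k \<in> F1 \<and> B k \<in> F2"
  shows "measure Pm (\<Union>k<n. A k \<times> B k) - measure Qm (\<Union>k<n. A k \<times> B k) \<le> beta_coef M F1 F2"
proof -
  define \<alpha> where "\<alpha> = (\<lambda>T. {x \<in> space M. \<forall>k<n. x \<in> A k \<longleftrightarrow> k \<in> T})"
  define \<gamma> where "\<gamma> = (\<lambda>T. {x \<in> space M. \<forall>k<n. x \<in> B k \<longleftrightarrow> k \<in> T})"
  define P1 where "P1 = \<alpha> ` Pow {..<n}"
  define P2 where "P2 = \<gamma> ` Pow {..<n}"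
  have P1: "is_fin_partition (space M) F1 P1" unfolding P1_def \<alpha>_def
    using AB by (intro atoms_partition(1)[OF sa1 sub1]) auto
  have P2: "is_fin_partition (space M) F2 P2" unfolding P2_def \<gamma>_def
    using AB by (intro atoms_partition(1)[OF sa2 sub2]) auto
  have fin: "finite P1" "finite P2" "P1 \<subseteq> F1" "P2 \<subseteq> F2" "\<Union>P1 = space M" "\<Union>P2 = space M"
    using P1 P2 unfolding is_fin_partition_def by auto
  define R where "R = (\<Union>k<n. A k \<times> B k)"
  define In where "In = {p \<in> P1 \<times> P2. fst p \<times> snd p \<subseteq> R}"
  define Out where "Out = P1 \<times> P2 - In"
  have RU: "R = (\<Union>p\<in>In. fst p \<times> snd p)"
  proof
    show "(\<Union>p\<in>In. fst p \<times> snd p) \<subseteq> R" unfolding In_def by auto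
    show "R \<subseteq> (\<Union>p\<in>In. fst p \<times> snd p)"
    proof
      fix z assume z: "z \<in> R"
      then obtain x y k where xy: "z = (x, y)" "k < n" "x \<in> A k" "y \<in> B k" unfolding R_def by auto
      have "A k \<in> sets M" "B k \<in> sets M" using xy AB sub1 sub2 by auto
      then have xs: "x \<in> space M" "y \<in> space M" using xy sets.sets_into_space by auto
      define Tx where "Tx = {k. k < n \<and> x \<in> A k}"
      define Ty where "Ty = {k. k < n \<and> y \<in> B k}"
      have cell: "(\<alpha> Tx, \<gamma> Ty) \<in> P1 \<times> P2" unfolding P1_def P2_def Tx_def Ty_def by auto
      have "\<alpha> Tx \<times> \<gamma> Ty \<subseteq> R"
      proof
        fix w assume "w \<in> \<alpha> Tx \<times> \<gamma> Ty"
        then have "fst w \<in> A k" "snd w \<in> B k" using xy unfolding \<alpha>_def \<gamma>_def Tx_def Ty_def by auto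
        then show "w \<in> R" unfolding R_def using xy(2) by (cases w) auto
      qed
      moreover have "z \<in> \<alpha> Tx \<times> \<gamma> Ty" using xy xs unfolding \<alpha>_def \<gamma>_def Tx_def Ty_def by auto
      ultimately show "z \<in> (\<Union>p\<in>In. fst p \<times> snd p)" using cell unfolding In_def by force
    qed
  qed
  have ALL: "space M \<times> space M = (\<Union>p\<in>P1 \<times> P2. fst p \<times> snd p)"
  proof
    show "space M \<times> space M \<subseteq> (\<Union>p\<in>P1 \<times> P2. fst p \<times> snd p)"
    proof
      fix z assume "z \<in> space M \<times> space M"
      then obtain a b where "a \<in> P1" "b \<in> P2" "fst z \<in> a" "snd z \<in> b"
        using fin(5,6) by (metis UnionE mem_Times_iff)
      then show "z \<in> (\<Union>p\<in>P1 \<times> P2. fst p \<times> snd p)" by (intro UN_I[of "(a,b)"]) (auto simp: mem_Times_iff)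
    qed
  qed (use fin(5,6) in auto)
  define d where "d p = measure Pm (fst p \<times> snd p) - measure Qm (fst p \<times> snd p)" for p
  have InS: "In \<subseteq> P1 \<times> P2" unfolding In_def by auto
  have finPP: "finite (P1 \<times> P2)" using fin by simp
  have nuR: "measure Pm R - measure Qm R = (\<Sum>p\<in>In. d p)"
    unfolding RU d_def using cells_union[OF P1 P2 InS] by (simp add: sum_subtractf)
  have "measure Pm (space M \<times> space M) - measure Qm (space M \<times> space M) = (\<Sum>p\<in>P1 \<times> P2. d p)"
    unfolding ALL d_def using cells_union[OF P1 P2 order_refl] by (simp add: sum_subtractf)
  moreover have "measure Pm (space M \<times> space M) = 1" "measure Qm (space M \<times> space M) = 1"
    using prob_space.prob_space[OF prob_Pm] prob_space.prob_space[OF prob_Qm] space_Qm sets_Pm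
      sets_eq_imp_space_eq[OF sets_Pm] by auto
  ultimately have tot: "(\<Sum>p\<in>P1 \<times> P2. d p) = 0" by simp
  have split: "(\<Sum>p\<in>P1 \<times> P2. g p) = (\<Sum>p\<in>In. g p) + (\<Sum>p\<in>Out. g p)" for g :: "_ \<Rightarrow> real"
    unfolding Out_def using sum.subset_diff[OF InS finPP, of g] by (simp add: add.commute)
  have "2 * (measure Pm R - measure Qm R) = (\<Sum>p\<in>In. d p) - (\<Sum>p\<in>Out. d p)"
    using nuR tot split[of d] by simp
  also have "\<dots> \<le> (\<Sum>p\<in>In. \<bar>d p\<bar>) + (\<Sum>p\<in>Out. \<bar>d p\<bar>)"
  proof -
    have "(\<Sum>p\<in>In. d p) \<le> (\<Sum>p\<in>In. \<bar>d p\<bar>)" by (rule sum_mono) simp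
    moreover have "- (\<Sum>p\<in>Out. d p) \<le> (\<Sum>p\<in>Out. \<bar>d p\<bar>)"
      unfolding sum_negf[symmetric] by (rule sum_mono) simp
    ultimately show ?thesis by linarith
  qed
  also have "\<dots> = (\<Sum>p\<in>P1 \<times> P2. \<bar>d p\<bar>)" using split[of "\<lambda>p. \<bar>d p\<bar>"] by simp
  also have "\<dots> = (\<Sum>a\<in>P1. \<Sum>b\<in>P2. \<bar>measure M (a \<inter> b) - measure M a * measure M b\<bar>)"
  proof -
    have "(\<Sum>p\<in>P1 \<times> P2. \<bar>d p\<bar>) = (\<Sum>a\<in>P1. \<Sum>b\<in>P2. \<bar>d (a, b)\<bar>)"
      unfolding sum.cartesian_product by (simp add: case_prod_unfold)
    also have "\<dots> = (\<Sum>a\<in>P1. \<Sum>b\<in>P2. \<bar>measure M (a \<inter> b) - measure M a * measure M b\<bar>)"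
    proof (intro sum.cong refl)
      fix a b assume "a \<in> P1" "b \<in> P2"
      then have "a \<in> F1" "b \<in> F2" using fin(3,4) by auto
      then show "\<bar>d (a, b)\<bar> = \<bar>measure M (a \<inter> b) - measure M a * measure M b\<bar>"
        unfolding d_def by (simp add: measure_Pm_Times measure_Qm_Times)
    qed
    finally show ?thesis .
  qed
  finally have "measure Pm R - measure Qm R \<le> (1/2) * (\<Sum>a\<in>P1. \<Sum>b\<in>P2. \<bar>measure M (a \<inter> b) - measure M a * measure M b\<bar>)"
    by simp
  also have "\<dots> \<le> beta_coef M F1 F2" by (rule beta_le[OF prob P1 sub1 P2 sub2])
  finally show ?thesis unfolding R_def .
qed

end

context twoalg begin

definition "Rect = {a \<times> b | a b. a \<in> F1 \<and> b \<in> F2}"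
definition "G = {\<Union>S | S. finite S \<and> S \<subseteq> Rect}"

lemma Rect_Int: "r \<in> Rect \<Longrightarrow> s \<in> Rect \<Longrightarrow> r \<inter> s \<in> Rect"
proof -
  interpret s1: sigma_algebra "space M" F1 by (rule sa1)
  interpret s2: sigma_algebra "space M" F2 by (rule sa2)
  assume "r \<in> Rect" "s \<in> Rect"
  then obtain a b c d where "r = a \<times> b" "s = c \<times> d" "a \<in> F1" "b \<in> F2" "c \<in> F1" "d \<in> F2"
    unfolding Rect_def by auto
  then show ?thesis unfolding Rect_def by (auto simp: Times_Int_Times)
qed

lemma G_Int: "x \<in> G \<Longrightarrow> y \<in> G \<Longrightarrow> x \<inter> y \<in> G"
proof -
  assume "x \<in> G" "y \<in> G"
  then obtain S1 S2 where S: "x = \<Union>S1" "finite S1" "S1 \<subseteq> Rect" "y = \<Union>S2" "finite S2" "S2 \<subseteq> Rect"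
    unfolding G_def by auto
  define T where "T = (\<lambda>p. fst p \<inter> snd p) ` (S1 \<times> S2)"
  have "x \<inter> y = \<Union>T" unfolding S(1,4) T_def by (auto simp: image_iff)
  moreover have "T \<subseteq> Rect" unfolding T_def using S(3,6) by (auto intro!: Rect_Int)
  moreover have "finite T" using S(2,5) unfolding T_def by simp
  ultimately show ?thesis unfolding G_def by (intro CollectI exI[of _ T] conjI)
qed

lemma G_Un: "x \<in> G \<Longrightarrow> y \<in> G \<Longrightarrow> x \<union> y \<in> G"
proof -
  assume "x \<in> G" "y \<in> G"
  then obtain S1 S2 where S: "x = \<Union>S1" "finite S1" "S1 \<subseteq> Rect" "y = \<Union>S2" "finite S2" "S2 \<subseteq> Rect"
    unfolding G_def by auto
  have "x \<union> y = \<Union>(S1 \<union> S2)" unfolding S(1,4) by auto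
  moreover have "finite (S1 \<union> S2)" "S1 \<union> S2 \<subseteq> Rect" using S by auto
  ultimately show ?thesis unfolding G_def by (intro CollectI exI[of _ "S1 \<union> S2"] conjI)
qed

lemma Rect_G: "r \<in> Rect \<Longrightarrow> r \<in> G"
  unfolding G_def by (intro CollectI exI[of _ "{r}"]) auto

lemma G_empty: "{} \<in> G"
  unfolding G_def by (intro CollectI exI[of _ "{}"]) auto

lemma F1_space: "space M \<in> F1"
proof - interpret sigma_algebra "space M" F1 by (rule sa1) show ?thesis by (rule top) qed
lemma F2_space: "space M \<in> F2"
proof - interpret sigma_algebra "space M" F2 by (rule sa2) show ?thesis by (rule top) qed
lemma F1_compl: "a \<in> F1 \<Longrightarrow> space M - a \<in> F1"
proof - interpret sigma_algebra "space M" F1 by (rule sa1) show "a \<in> F1 \<Longrightarrow> space M - a \<in> F1" by (rule compl_sets) qed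
lemma F2_compl: "a \<in> F2 \<Longrightarrow> space M - a \<in> F2"
proof - interpret sigma_algebra "space M" F2 by (rule sa2) show "a \<in> F2 \<Longrightarrow> space M - a \<in> F2" by (rule compl_sets) qed

lemma Rect_compl: "r \<in> Rect \<Longrightarrow> space M \<times> space M - r \<in> G"
proof -
  assume "r \<in> Rect"
  then obtain a b where ab: "r = a \<times> b" "a \<in> F1" "b \<in> F2" unfolding Rect_def by auto
  have "a \<in> sets M" "b \<in> sets M" using ab sub1 sub2 by auto
  then have sub: "a \<subseteq> space M" "b \<subseteq> space M" using sets.sets_into_space by auto
  have "space M \<times> space M - r = (space M - a) \<times> space M \<union> space M \<times> (space M - b)"
    using ab sub by auto
  moreover have "(space M - a) \<times> space M \<in> G" "space M \<times> (space M - b) \<in> G"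
    using ab F1_space F2_space F1_compl F2_compl unfolding Rect_def
    by (blast intro!: Rect_G[unfolded Rect_def])+
  ultimately show ?thesis by (simp add: G_Un)
qed

lemma G_compl: "x \<in> G \<Longrightarrow> space M \<times> space M - x \<in> G"
proof -
  assume "x \<in> G"
  then obtain S where S: "x = \<Union>S" "finite S" "S \<subseteq> Rect" unfolding G_def by auto
  have "space M \<times> space M - \<Union>S \<in> G" using S(2,3)
  proof (induction S rule: finite_induct)
    case empty
    have "space M \<times> space M \<in> Rect" unfolding Rect_def using F1_space F2_space by auto
    then show ?case by (simp add: Rect_G)
  next
    case (insert r S)
    have "space M \<times> space M - \<Union>(insert r S) = (space M \<times> space M - r) \<inter> (space M \<times> space M - \<Union>S)"
      by auto
    then show ?case using insert Rect_compl G_Int by auto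
  qed
  then show ?thesis using S by simp
qed

lemma G_sets: "x \<in> G \<Longrightarrow> x \<in> sets Qm"
proof -
  assume "x \<in> G"
  then obtain S where S: "x = \<Union>S" "finite S" "S \<subseteq> Rect" unfolding G_def by auto
  have "Rect \<subseteq> sets Qm" unfolding Rect_def sets_Qm by auto
  then show ?thesis using S by (auto intro!: sets.finite_Union)
qed

lemma G_bound: "x \<in> G \<Longrightarrow> measure Pm x - measure Qm x \<le> beta_coef M F1 F2"
proof -
  assume "x \<in> G"
  then obtain S where S: "x = \<Union>S" "finite S" "S \<subseteq> Rect" unfolding G_def by auto
  obtain n f where nf: "S = f ` {i::nat. i < n}" using S(2) by (auto simp: finite_conv_nat_seg_image)
  have "\<forall>k. \<exists>ab. k < n \<longrightarrow> (f k = fst ab \<times> snd ab \<and> fst ab \<in> F1 \<and> snd ab \<in> F2)"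
  proof
    fix k show "\<exists>ab. k < n \<longrightarrow> (f k = fst ab \<times> snd ab \<and> fst ab \<in> F1 \<and> snd ab \<in> F2)"
    proof (cases "k < n")
      case True
      then have "f k \<in> Rect" using S nf by auto
      then obtain a b where "f k = a \<times> b" "a \<in> F1" "b \<in> F2" unfolding Rect_def by auto
      then show ?thesis by (intro exI[of _ "(a, b)"]) auto
    qed auto
  qed
  then obtain g where g0: "\<forall>k. k < n \<longrightarrow> (f k = fst (g k) \<times> snd (g k) \<and> fst (g k) \<in> F1 \<and> snd (g k) \<in> F2)"
    by (rule choice[THEN exE])
  then have g: "\<And>k. k < n \<Longrightarrow> f k = fst (g k) \<times> snd (g k) \<and> fst (g k) \<in> F1 \<and> snd (g k) \<in> F2"
    by blast
  have "x = (\<Union>k<n. f k)" unfolding S(1) nf by (simp add: lessThan_def)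
  also have "\<dots> = (\<Union>k<n. fst (g k) \<times> snd (g k))" using g by (intro SUP_cong refl) auto
  finally have "x = (\<Union>k<n. fst (g k) \<times> snd (g k))" .
  moreover have "measure Pm (\<Union>k<n. fst (g k) \<times> snd (g k)) - measure Qm (\<Union>k<n. fst (g k) \<times> snd (g k))
      \<le> beta_coef M F1 F2"
    using g by (intro rect_bound) auto
  ultimately show ?thesis by simp
qed

lemma sigma_bound:
  assumes C: "C \<in> sets Qm"
  shows "measure Pm C - measure Qm C \<le> beta_coef M F1 F2"
proof (rule field_le_epsilon)
  fix \<epsilon> :: real assume ep: "\<epsilon> > 0"
  interpret P: prob_space Pm by (rule prob_Pm)
  interpret Q: prob_space Qm by (rule prob_Qm)
  have spP: "space Pm = space M \<times> space M" using sets_eq_imp_space_eq[OF sets_Pm] space_Qm by simp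
  have "\<forall>\<epsilon>>0. \<exists>R\<in>G. measure Pm (sdiff C R) + measure Qm (sdiff C R) < \<epsilon>"
  proof (rule approx_sigma[where E=Rect])
    show "finite_measure Pm" "finite_measure Qm" by unfold_locales
    show "space Pm = space M \<times> space M" "space Qm = space M \<times> space M" by (fact spP, fact space_Qm)
    show "sets Pm = sigma_sets (space M \<times> space M) Rect" "sets Qm = sigma_sets (space M \<times> space M) Rect"
      using sets_Pm sets_Qm unfolding Rect_def by auto
    show "Rect \<subseteq> G" using Rect_G by auto
    show "G \<subseteq> sigma_sets (space M \<times> space M) Rect" using G_sets sets_Qm unfolding Rect_def by auto
    show "{} \<in> G" by (rule G_empty)
    show "\<And>a b. a \<in> G \<Longrightarrow> b \<in> G \<Longrightarrow> a \<union> b \<in> G" by (rule G_Un)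
    show "\<And>a. a \<in> G \<Longrightarrow> space M \<times> space M - a \<in> G" by (rule G_compl)
    show "C \<in> sigma_sets (space M \<times> space M) Rect" using C sets_Qm unfolding Rect_def by auto
  qed
  then obtain R where R: "R \<in> G" "measure Pm (sdiff C R) + measure Qm (sdiff C R) < \<epsilon>" using ep by blast
  have Rs: "R \<in> sets Qm" using G_sets R(1) .
  have Ds: "C - R \<in> sets Qm" "R - C \<in> sets Qm" using C Rs by auto
  have sd: "sdiff C R = (C - R) \<union> (R - C)" unfolding sdiff_def ..
  have m1: "measure Pm (C - R) \<le> measure Pm (sdiff C R)"
    using Ds sets_Pm unfolding sd by (intro P.finite_measure_mono) auto
  have m2: "measure Qm (R - C) \<le> measure Qm (sdiff C R)"
    using Ds unfolding sd by (intro Q.finite_measure_mono) auto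
  have "measure Pm C \<le> measure Pm R + measure Pm (C - R)"
  proof -
    have "measure Pm C \<le> measure Pm (R \<union> (C - R))"
      using C Rs sets_Pm by (intro P.finite_measure_mono) auto
    also have "\<dots> \<le> measure Pm R + measure Pm (C - R)"
      using Rs Ds sets_Pm by (intro measure_Un_le) auto
    finally show ?thesis .
  qed
  moreover have "measure Qm R \<le> measure Qm C + measure Qm (R - C)"
  proof -
    have "measure Qm R \<le> measure Qm (C \<union> (R - C))"
      using C Rs by (intro Q.finite_measure_mono) auto
    also have "\<dots> \<le> measure Qm C + measure Qm (R - C)"
      using C Ds by (intro measure_Un_le) auto
    finally show ?thesis .
  qed
  moreover have "measure Pm R - measure Qm R \<le> beta_coef M F1 F2" using G_bound R(1) .
  ultimately show "measure Pm C - measure Qm C \<le> beta_coef M F1 F2 + \<epsilon>"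
    using m1 m2 R(2) by linarith
qed

end

lemma amgm_powr:
  fixes g :: "nat \<Rightarrow> real" and J :: nat and c :: real
  assumes J: "J \<ge> 1" and g: "\<And>j. g j \<ge> 0"
  shows "(\<Prod>j<J. g j powr (c / J)) \<le> (\<Sum>j<J. g j powr c) / J"
proof -
  have "(\<Prod>j<J. g j powr c) powr (1 / card {..<J}) \<le> (\<Sum>j<J. g j powr c / card {..<J})"
    using J by (intro arith_geom_mean) (auto simp: lessThan_empty_iff)
  moreover have "(\<Prod>j<J. g j powr c) powr (1 / card {..<J}) = (\<Prod>j<J. g j powr (c / J))"
    by (simp add: prod_powr_distrib powr_powr)
  moreover have "(\<Sum>j<J. g j powr c / card {..<J}) = (\<Sum>j<J. g j powr c) / J"
    by (simp add: sum_divide_distrib)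
  ultimately show ?thesis by simp
qed

lemma prod_moments:
  fixes L :: "'a measure" and h :: "nat \<Rightarrow> 'a \<Rightarrow> real" and J :: nat and \<delta> V :: real
  assumes fin: "finite_measure L" and J: "J \<ge> 1" and dl: "\<delta> > 0"
    and hm: "\<And>j. j < J \<Longrightarrow> h j \<in> borel_measurable L"
    and hi: "\<And>j. j < J \<Longrightarrow> integrable L (\<lambda>x. \<bar>h j x\<bar> powr (J + \<delta>))"
    and hb: "\<And>j. j < J \<Longrightarrow> (\<integral>x. \<bar>h j x\<bar> powr (J + \<delta>) \<partial>L) \<le> V"
  shows "integrable L (\<lambda>x. \<bar>\<Prod>j<J. h j x\<bar> powr ((J + \<delta>) / J))"
    "(\<integral>x. \<bar>\<Prod>j<J. h j x\<bar> powr ((J + \<delta>) / J) \<partial>L) \<le> V"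
    "integrable L (\<lambda>x. \<Prod>j<J. h j x)"
proof -
  interpret finite_measure L by fact
  have pm: "(\<lambda>x. \<Prod>j<J. h j x) \<in> borel_measurable L" using hm by (intro borel_measurable_prod) auto
  have S: "integrable L (\<lambda>x. (\<Sum>j<J. \<bar>h j x\<bar> powr (J + \<delta>)) / J)" using hi by (intro integrable_divide Bochner_Integration.integrable_sum) auto
  have pt: "\<bar>\<Prod>j<J. h j x\<bar> powr ((J + \<delta>) / J) \<le> (\<Sum>j<J. \<bar>h j x\<bar> powr (J + \<delta>)) / J" for x
  proof -
    have "\<bar>\<Prod>j<J. h j x\<bar> powr ((J + \<delta>) / J) = (\<Prod>j<J. \<bar>h j x\<bar> powr ((J + \<delta>) / J))"
      by (simp add: abs_prod prod_powr_distrib)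
    also have "\<dots> \<le> (\<Sum>j<J. \<bar>h j x\<bar> powr (J + \<delta>)) / J"
      using J by (intro amgm_powr) auto
    finally show ?thesis .
  qed
  show I1: "integrable L (\<lambda>x. \<bar>\<Prod>j<J. h j x\<bar> powr ((J + \<delta>) / J))"
    by (rule Bochner_Integration.integrable_bound[OF S]) (use pm in \<open>measurable\<close>, auto intro!: AE_I2 pt
      simp: abs_le_iff sum_nonneg)
  have "(\<integral>x. \<bar>\<Prod>j<J. h j x\<bar> powr ((J + \<delta>) / J) \<partial>L) \<le> (\<integral>x. (\<Sum>j<J. \<bar>h j x\<bar> powr (J + \<delta>)) / J \<partial>L)"
    by (intro integral_mono I1 S pt)
  also have "\<dots> = (\<Sum>j<J. (\<integral>x. \<bar>h j x\<bar> powr (J + \<delta>) \<partial>L)) / J"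
    using hi by (simp add: Bochner_Integration.integral_sum)
  also have "\<dots> \<le> (\<Sum>j<J. V) / J"
    using hb by (intro divide_right_mono sum_mono) auto
  also have "\<dots> = V" using J by simp
  finally show "(\<integral>x. \<bar>\<Prod>j<J. h j x\<bar> powr ((J + \<delta>) / J) \<partial>L) \<le> V" .
  have S2: "integrable L (\<lambda>x. (\<Sum>j<J. 1 + \<bar>h j x\<bar> powr (J + \<delta>)) / J)" using hi by (intro integrable_divide Bochner_Integration.integrable_sum Bochner_Integration.integrable_add) auto
  have pt2: "\<bar>\<Prod>j<J. h j x\<bar> \<le> (\<Sum>j<J. 1 + \<bar>h j x\<bar> powr (J + \<delta>)) / J" for x
  proof -
    have "\<bar>\<Prod>j<J. h j x\<bar> = (\<Prod>j<J. \<bar>h j x\<bar> powr (J / J))"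
      using J by (simp add: abs_prod)
    also have "\<dots> \<le> (\<Sum>j<J. \<bar>h j x\<bar> powr J) / J"
      using J by (intro amgm_powr) auto
    also have "\<dots> \<le> (\<Sum>j<J. 1 + \<bar>h j x\<bar> powr (J + \<delta>)) / J"
    proof (intro divide_right_mono sum_mono)
      fix j
      show "\<bar>h j x\<bar> powr J \<le> 1 + \<bar>h j x\<bar> powr (J + \<delta>)"
      proof (cases "\<bar>h j x\<bar> \<le> 1")
        case True
        then have "\<bar>h j x\<bar> powr J \<le> 1" using J by (simp add: powr_le1)
        then show ?thesis by (smt (verit) powr_ge_zero)
      next
        case False
        then have "\<bar>h j x\<bar> powr J \<le> \<bar>h j x\<bar> powr (J + \<delta>)" using dl by (intro powr_mono) auto
        then show ?thesis by simp
      qed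
    qed simp
    finally show ?thesis .
  qed
  show "integrable L (\<lambda>x. \<Prod>j<J. h j x)"
    by (rule Bochner_Integration.integrable_bound[OF S2]) (use pm in \<open>measurable\<close>, auto intro!: AE_I2 order_trans[OF pt2] divide_right_mono)
qed


lemma gen_sigma_facts:
  fixes X :: "'i \<Rightarrow> 'w \<Rightarrow> 'b::topological_space"
  assumes Xm: "\<forall>i\<in>I'. X i \<in> borel_measurable M"
  shows "sigma_algebra (space M) (gen_sigma M X I')" "gen_sigma M X I' \<subseteq> sets M"
proof -
  have gen: "(\<Union>i\<in>I'. {X i -` A \<inter> space M | A. A \<in> sets borel}) \<subseteq> Pow (space M)" by auto
  show "sigma_algebra (space M) (gen_sigma M X I')"
    unfolding gen_sigma_def by (rule sigma_algebra_sigma_sets[OF gen])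
  have "(\<Union>i\<in>I'. {X i -` A \<inter> space M | A. A \<in> sets borel}) \<subseteq> sets M"
    using Xm by (auto intro: measurable_sets)
  then show "gen_sigma M X I' \<subseteq> sets M"
    unfolding gen_sigma_def by (rule sets.sigma_sets_subset)
qed

lemma gen_sigma_meas:
  fixes X :: "'i \<Rightarrow> 'w \<Rightarrow> 'b::topological_space"
  assumes "sets N = gen_sigma M X I'" "space N = space M" "i \<in> I'"
  shows "X i \<in> measurable N borel"
proof (rule measurableI)
  fix A :: "'b set" assume "A \<in> sets borel"
  then have "X i -` A \<inter> space M \<in> gen_sigma M X I'"
    unfolding gen_sigma_def using assms(3) by (intro sigma_sets.Basic) blast
  then show "X i -` A \<inter> space N \<in> sets N" using assms by simp
qed simp

lemma int_le_from_Lp: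
  assumes "Lp_norm L g p \<le> K" "p > 0"
  shows "(\<integral>x. \<bar>g x\<bar> powr p \<partial>L) \<le> K powr p"
proof -
  define A where "A = (\<integral>x. \<bar>g x\<bar> powr p \<partial>L)"
  have A0: "A \<ge> 0" unfolding A_def by (intro integral_nonneg_AE AE_I2) simp
  have "A = (A powr (1/p)) powr p" using A0 assms(2) by (simp add: powr_powr)
  also have "\<dots> \<le> K powr p"
    using assms unfolding Lp_norm_def A_def by (intro powr_mono2) auto
  finally show ?thesis unfolding A_def .
qed

lemma Lp_le_Hbound:
  fixes X :: "'i \<Rightarrow> 'w \<Rightarrow> 'b::topological_space"
  assumes "finite I" "i \<in> I" "k \<in> I" "i \<noteq> k"
  shows "Lp_norm M (\<lambda>\<omega>. H (X i \<omega>) (X k \<omega>)) p \<le> Hbound M X H I p"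
    "Lp_norm (distr M borel (X i) \<Otimes>\<^sub>M distr M borel (X k)) (\<lambda>xy. H (fst xy) (snd xy)) p \<le> Hbound M X H I p"
proof -
  let ?S = "{(i, j). i \<in> I \<and> j \<in> I \<and> i \<noteq> j}"
  let ?g = "\<lambda>ij. max (Lp_norm M (\<lambda>\<omega>. H (X (fst ij) \<omega>) (X (snd ij) \<omega>)) p)
            (Lp_norm (distr M borel (X (fst ij)) \<Otimes>\<^sub>M distr M borel (X (snd ij)))
                     (\<lambda>xy. H (fst xy) (snd xy)) p)"
  have fin: "finite ?S" by (rule finite_subset[of _ "I \<times> I"]) (use assms(1) in auto)
  have bdd: "bdd_above (?g ` ?S)" using fin by (intro bdd_above_finite finite_imageI)
  have mem: "(i, k) \<in> ?S" using assms by auto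
  have "?g (i, k) \<le> Hbound M X H I p"
    unfolding Hbound_def by (rule cSUP_upper[OF mem bdd])
  then show "Lp_norm M (\<lambda>\<omega>. H (X i \<omega>) (X k \<omega>)) p \<le> Hbound M X H I p"
    "Lp_norm (distr M borel (X i) \<Otimes>\<^sub>M distr M borel (X k)) (\<lambda>xy. H (fst xy) (snd xy)) p \<le> Hbound M X H I p"
    by auto
qed


lemma distr_pair_snd':
  assumes "prob_space N" "prob_space K"
  shows "distr (N \<Otimes>\<^sub>M K) K snd = K"
proof (intro measure_eqI)
  interpret N: prob_space N by fact
  interpret K: prob_space K by fact
  fix A assume A: "A \<in> sets (distr (N \<Otimes>\<^sub>M K) K snd)"
  from A have "emeasure (distr (N \<Otimes>\<^sub>M K) K snd) A = emeasure (N \<Otimes>\<^sub>M K) (space N \<times> A)"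
    by (auto simp add: emeasure_distr space_pair_measure dest: sets.sets_into_space intro!: arg_cong2[where f=emeasure])
  with A show "emeasure (distr (N \<Otimes>\<^sub>M K) K snd) A = emeasure K A"
    by (simp add: K.emeasure_pair_measure_Times N.emeasure_space_1)
qed simp

context twoalg begin

lemma meas_M1_M: "f \<in> measurable M1 N \<Longrightarrow> f \<in> measurable M N"
  using sub1 unfolding measurable_def by (auto simp: M1_facts)
lemma meas_M2_M: "f \<in> measurable M2 N \<Longrightarrow> f \<in> measurable M N"
  using sub2 unfolding measurable_def by (auto simp: M2_facts)

lemma distr_M1: "U \<in> measurable M1 borel \<Longrightarrow> distr M1 borel U = distr M borel U"
proof (rule measure_eqI)
  assume U: "U \<in> measurable M1 borel"
  then have U': "U \<in> measurable M borel" by (rule meas_M1_M)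
  fix A assume "A \<in> sets (distr M1 borel U)"
  then have A: "A \<in> sets borel" by simp
  have "U -` A \<inter> space M1 \<in> sets M1" using U A by (rule measurable_sets)
  then show "emeasure (distr M1 borel U) A = emeasure (distr M borel U) A"
    using A U U' by (simp add: emeasure_distr M1_facts)
qed simp

lemma distr_M2: "U \<in> measurable M2 borel \<Longrightarrow> distr M2 borel U = distr M borel U"
proof (rule measure_eqI)
  assume U: "U \<in> measurable M2 borel"
  then have U': "U \<in> measurable M borel" by (rule meas_M2_M)
  fix A assume "A \<in> sets (distr M2 borel U)"
  then have A: "A \<in> sets borel" by simp
  have "U -` A \<inter> space M2 \<in> sets M2" using U A by (rule measurable_sets)
  then show "emeasure (distr M2 borel U) A = emeasure (distr M borel U) A"
    using A U U' by (simp add: emeasure_distr M2_facts)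
qed simp

lemma distr_Qm_pair:
  fixes U W :: "'w \<Rightarrow> 'b::topological_space"
  assumes U: "U \<in> measurable M1 borel" and W: "W \<in> measurable M2 borel"
  shows "distr Qm (borel \<Otimes>\<^sub>M borel) (\<lambda>z. (U (fst z), W (snd z))) = distr M borel U \<Otimes>\<^sub>M distr M borel W"
proof -
  have sf: "sigma_finite_measure (distr M2 borel W)"
    using prob_space.prob_space_distr[OF M2_facts(4) W] by (simp add: prob_space_imp_sigma_finite)
  have "distr M1 borel U \<Otimes>\<^sub>M distr M2 borel W = distr (M1 \<Otimes>\<^sub>M M2) (borel \<Otimes>\<^sub>M borel) (\<lambda>(x, y). (U x, W y))"
    by (rule pair_measure_distr[OF U W sf])
  then show ?thesis
    unfolding Qm_def distr_M1[OF U, symmetric] distr_M2[OF W, symmetric]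
    by (simp add: case_prod_unfold)
qed

lemma snd_int:
  fixes g :: "'w \<Rightarrow> real"
  assumes g: "g \<in> borel_measurable M2"
  shows "integrable Qm (\<lambda>z. g (snd z)) \<longleftrightarrow> integrable M g"
    "(\<integral>z. g (snd z) \<partial>Qm) = (\<integral>x. g x \<partial>M)"
proof -
  have D: "distr Qm M2 snd = M2" unfolding Qm_def
    by (rule distr_pair_snd'[OF M1_facts(4) M2_facts(4)])
  have sm: "snd \<in> measurable Qm M2" unfolding Qm_def by simp
  have sub: "sets M2 \<subseteq> sets M" "space M2 = space M" "\<And>A. A \<in> sets M2 \<Longrightarrow> emeasure M2 A = emeasure M A"
    using sub2 by (auto simp: M2_facts)
  have "integrable Qm (\<lambda>z. g (snd z)) \<longleftrightarrow> integrable M2 g"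
    using integrable_distr_eq[OF sm g] D by simp
  also have "\<dots> \<longleftrightarrow> integrable M g" by (rule integrable_subalgebra[OF g sub])
  finally show "integrable Qm (\<lambda>z. g (snd z)) \<longleftrightarrow> integrable M g" .
  have "(\<integral>z. g (snd z) \<partial>Qm) = (\<integral>x. g x \<partial>M2)"
    using integral_distr[OF sm g] D by simp
  also have "\<dots> = (\<integral>x. g x \<partial>M)" by (rule integral_subalgebra[OF g sub])
  finally show "(\<integral>z. g (snd z) \<partial>Qm) = (\<integral>x. g x \<partial>M)" .
qed

lemma diag_int:
  fixes g :: "'w \<times> 'w \<Rightarrow> real"
  assumes g: "g \<in> borel_measurable Qm"
  shows "integrable Pm g \<longleftrightarrow> integrable M (\<lambda>x. g (x, x))"
    "(\<integral>z. g z \<partial>Pm) = (\<integral>x. g (x, x) \<partial>M)"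
  unfolding Pm_def using integrable_distr_eq[OF diag_meas g] integral_distr[OF diag_meas g] by auto

end

theorem mainTheorem12:
  fixes M :: "'w measure"
    and I :: "'i set"
    and dd :: "'i \<Rightarrow> 'i \<Rightarrow> real"
    and X :: "'i \<Rightarrow> 'w \<Rightarrow> real ^ 'd"
    and \<beta> :: "enat \<Rightarrow> enat \<Rightarrow> real \<Rightarrow> real"
    and H :: "real ^ 'd \<Rightarrow> real ^ 'd \<Rightarrow> real"
    and \<delta> m :: real
    and J :: nat
    and e :: "nat \<Rightarrow> 'i"
  assumes prob: "prob_space M"
    and finI: "finite I"
    and metric: "\<forall>i\<in>I. \<forall>j\<in>I. (dd i j = 0 \<longleftrightarrow> i = j) \<and> dd i j = dd j i \<and>
                   (\<forall>k\<in>I. dd i k \<le> dd i j + dd j k)"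
    and Xmeas: "\<forall>i\<in>I. X i \<in> borel_measurable M"
    and assumption2: "\<forall>n1 n2 (r::real). r > 0 \<longrightarrow>
          (\<forall>I1 I2. I1 \<subseteq> I \<and> I2 \<subseteq> I \<and> enat (card I1) \<le> n1 \<and> enat (card I2) \<le> n2
              \<and> (\<forall>i\<in>I1. \<forall>j\<in>I2. dd i j \<ge> r)
              \<longrightarrow> beta_coef M (gen_sigma M X I1) (gen_sigma M X I2) \<le> \<beta> n1 n2 r)"
    and Hmeas: "(\<lambda>xy. H (fst xy) (snd xy)) \<in> borel_measurable (borel \<Otimes>\<^sub>M borel)"
    and Hsym: "\<forall>x y. H x y = H y x"
    and degenerate: "\<forall>k\<in>I. \<forall>x. integrable M (\<lambda>\<omega>. H (X k \<omega>) x) \<and>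
                                 prob_space.expectation M (\<lambda>\<omega>. H (X k \<omega>) x) = 0"
    and delta: "\<delta> > 0"
    and Hmoments: "\<forall>i\<in>I. \<forall>j\<in>I. i \<noteq> j \<longrightarrow>
          integrable M (\<lambda>\<omega>. \<bar>H (X i \<omega>) (X j \<omega>)\<bar> powr (real J + \<delta>)) \<and>
          integrable (distr M borel (X i) \<Otimes>\<^sub>M distr M borel (X j))
                     (\<lambda>xy. \<bar>H (fst xy) (snd xy)\<bar> powr (real J + \<delta>))"
    and J: "J \<ge> 1"
    and e_in: "\<forall>p < 2 * J. e p \<in> I"
    and e_ne: "\<forall>j < J. e (2 * j) \<noteq> e (2 * j + 1)"
    and m_pos: "m > 0"
    and mfree: "\<exists>p < 2 * J. \<forall>q < 2 * J. q \<noteq> p \<longrightarrow> dd (e p) (e q) > m"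
  shows "\<bar>prob_space.expectation M (\<lambda>\<omega>. \<Prod>j<J. H (X (e (2 * j)) \<omega>) (X (e (2 * j + 1)) \<omega>))\<bar>
         \<le> 2 * Hbound M X H I (real J + \<delta>) ^ J
             * \<beta> 1 (enat (2 * J - 1)) m powr (\<delta> / (real J + \<delta>))"
proof -
  interpret P: prob_space M by (rule prob)
  obtain p where p: "p < 2 * J" "\<forall>q < 2 * J. q \<noteq> p \<longrightarrow> dd (e p) (e q) > m" using mfree by blast
  define s where "s = e p"
  define I1 where "I1 = {s}"
  define I2 where "I2 = e ` ({..<2 * J} - {p})"
  define F1 where "F1 = gen_sigma M X I1"
  define F2 where "F2 = gen_sigma M X I2"
  have sI: "s \<in> I" using e_in p(1) unfolding s_def by auto
  have I1I: "I1 \<subseteq> I" using sI unfolding I1_def by auto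
  have I2I: "I2 \<subseteq> I" using e_in unfolding I2_def by auto
  have eq_ne: "e q \<noteq> s" if "q < 2 * J" "q \<noteq> p" for q
  proof
    assume "e q = s"
    then have "dd (e p) (e q) = 0" using metric sI unfolding s_def by auto
    then show False using p(2) that m_pos by fastforce
  qed
  have g1: "sigma_algebra (space M) F1" "F1 \<subseteq> sets M"
    unfolding F1_def using Xmeas I1I by (intro gen_sigma_facts; auto)+
  have g2: "sigma_algebra (space M) F2" "F2 \<subseteq> sets M"
    unfolding F2_def using Xmeas I2I by (intro gen_sigma_facts; auto)+
  interpret T: twoalg M F1 F2 using prob g1 g2 by (intro twoalg.intro)
  define b where "b = beta_coef M F1 F2"
  have bb: "b \<le> \<beta> 1 (enat (2 * J - 1)) m"
  proof -
    have "card I1 = 1" unfolding I1_def by simp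
    moreover have "card I2 \<le> 2 * J - 1"
    proof -
      have "card I2 \<le> card ({..<2 * J} - {p})" unfolding I2_def by (rule card_image_le) simp
      also have "\<dots> = 2 * J - 1" using p(1) by simp
      finally show ?thesis .
    qed
    moreover have "\<forall>i\<in>I1. \<forall>j\<in>I2. dd i j \<ge> m"
      using p(2) unfolding I1_def I2_def s_def by (auto intro: less_imp_le)
    ultimately show ?thesis
      using assumption2 m_pos I1I I2I unfolding b_def F1_def F2_def
      by (auto simp: one_enat_def)
  qed
  have b0: "0 \<le> b"
  proof -
    have pa1: "is_fin_partition (space M) F1 {space M}"
      unfolding is_fin_partition_def using T.F1_space by (auto simp: disjoint_def)
    have pa2: "is_fin_partition (space M) F2 {space M}"
      unfolding is_fin_partition_def using T.F2_space by (auto simp: disjoint_def)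
    have "(1/2) * (\<Sum>a\<in>{space M}. \<Sum>c\<in>{space M}. \<bar>measure M (a \<inter> c) - measure M a * measure M c\<bar>) \<le> b"
      unfolding b_def by (rule beta_le[OF prob pa1 g1(2) pa2 g2(2)])
    then show ?thesis by (simp add: P.prob_space)
  qed
  define j0 where "j0 = p div 2"
  define pt where "pt = (if p = 2 * j0 then 2 * j0 + 1 else 2 * j0)"
  define t where "t = e pt"
  have j0J: "j0 < J" using p(1) unfolding j0_def by simp
  have ptJ: "pt < 2 * J" "pt \<noteq> p" using j0J p(1) unfolding pt_def j0_def by auto
  have pairs: "(2 * j0 = p \<and> 2 * j0 + 1 = pt) \<or> (2 * j0 = pt \<and> 2 * j0 + 1 = p)"
    unfolding pt_def j0_def by auto
  have tI2: "t \<in> I2" unfolding t_def I2_def using ptJ by auto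
  have ts: "t \<noteq> s" unfolding t_def using eq_ne ptJ by auto
  have tI: "t \<in> I" using tI2 I2I by auto
  have XsM1: "X s \<in> measurable T.M1 borel"
    by (rule gen_sigma_meas[of _ M X I1]) (use T.M1_facts(1,2) in \<open>auto simp: F1_def I1_def\<close>)
  have XM2: "X (e q) \<in> measurable T.M2 borel" if "q < 2 * J" "q \<noteq> p" for q
    by (rule gen_sigma_meas[of _ M X I2]) (use that T.M2_facts(1,2) in \<open>auto simp: F2_def I2_def\<close>)
  define Y where "Y q z = X (e q) (if q = p then fst z else snd z)" for q z
  have Ym: "Y q \<in> measurable T.Qm borel" if "q < 2 * J" for q
  proof (cases "q = p")
    case True
    then have "Y q = (\<lambda>z. X s (fst z))" unfolding Y_def s_def by auto
    then show ?thesis unfolding T.Qm_def using XsM1 by simp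
  next
    case False
    then have "Y q = (\<lambda>z. X (e q) (snd z))" unfolding Y_def by auto
    then show ?thesis unfolding T.Qm_def using XM2[OF that False] by simp
  qed
  define hh where "hh j z = H (Y (2 * j) z) (Y (2 * j + 1) z)" for j z
  have hhm: "hh j \<in> borel_measurable T.Qm" if "j < J" for j
  proof -
    have "(\<lambda>z. (Y (2 * j) z, Y (2 * j + 1) z)) \<in> measurable T.Qm (borel \<Otimes>\<^sub>M borel)"
      using that by (intro measurable_Pair Ym) auto
    from measurable_compose[OF this Hmeas] show ?thesis unfolding hh_def by simp
  qed
  define f where "f z = (\<Prod>j<J. hh j z)" for z
  have fm: "f \<in> borel_measurable T.Qm" unfolding f_def using hhm by (intro borel_measurable_prod) auto
  define c where "c = real J + \<delta>"
  have c0: "c > 0" unfolding c_def using delta by simp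
  define Hb where "Hb = Hbound M X H I c"
  define V where "V = Hb powr c"
  have Hb0: "0 \<le> Hb"
  proof -
    have "Lp_norm M (\<lambda>\<omega>. H (X s \<omega>) (X t \<omega>)) c \<le> Hb"
      unfolding Hb_def using finI sI tI ts by (intro Lp_le_Hbound(1)) auto
    moreover have "0 \<le> Lp_norm M (\<lambda>\<omega>. H (X s \<omega>) (X t \<omega>)) c" unfolding Lp_norm_def by simp
    ultimately show ?thesis by linarith
  qed
  have Hm2: "(\<lambda>xy. \<bar>H (fst xy) (snd xy)\<bar> powr c) \<in> borel_measurable (borel \<Otimes>\<^sub>M borel)"
    using Hmeas by measurable
  have abI: "e (2 * j) \<in> I" "e (2 * j + 1) \<in> I" "e (2 * j) \<noteq> e (2 * j + 1)" if "j < J" for j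
    using e_in e_ne that by auto
  have mPm: "integrable T.Pm (\<lambda>z. \<bar>hh j z\<bar> powr c) \<and> (\<integral>z. \<bar>hh j z\<bar> powr c \<partial>T.Pm) \<le> V"
    if j: "j < J" for j
  proof -
    have gm: "(\<lambda>z. \<bar>hh j z\<bar> powr c) \<in> borel_measurable T.Qm" using hhm[OF j] by measurable
    have dg: "hh j (x, x) = H (X (e (2 * j)) x) (X (e (2 * j + 1)) x)" for x
      unfolding hh_def Y_def by simp
    show ?thesis
      using T.diag_int[OF gm] Hmoments abI[OF j]
        int_le_from_Lp[OF Lp_le_Hbound(1)[where M=M and H=H and p=c and X=X, OF finI abI[OF j]] c0]
      unfolding dg V_def Hb_def c_def by auto
  qed
  have hh_j0: "hh j0 z = H (X s (fst z)) (X t (snd z))" for z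
    using pairs ptJ Hsym unfolding hh_def Y_def s_def t_def by auto
  have hh_j: "hh j z = H (X (e (2 * j)) (snd z)) (X (e (2 * j + 1)) (snd z))" if "j \<noteq> j0" for j z
  proof -
    have "2 * j \<noteq> p" "2 * j + 1 \<noteq> p" using that unfolding j0_def by auto
    then show ?thesis unfolding hh_def Y_def by simp
  qed
  have mQm: "integrable T.Qm (\<lambda>z. \<bar>hh j z\<bar> powr c) \<and> (\<integral>z. \<bar>hh j z\<bar> powr c \<partial>T.Qm) \<le> V"
    if j: "j < J" for j
  proof (cases "j = j0")
    case True
    define G where "G z = (X s (fst z), X t (snd z))" for z
    have XtM2: "X t \<in> measurable T.M2 borel" unfolding t_def using XM2 ptJ by auto
    have Gm: "G \<in> measurable T.Qm (borel \<Otimes>\<^sub>M borel)"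
      unfolding G_def T.Qm_def using XsM1 XtM2 by measurable
    have D: "distr T.Qm (borel \<Otimes>\<^sub>M borel) G = distr M borel (X s) \<Otimes>\<^sub>M distr M borel (X t)"
      unfolding G_def by (rule T.distr_Qm_pair[OF XsM1 XtM2])
    have e1: "(\<lambda>z. \<bar>hh j z\<bar> powr c) = (\<lambda>z. (\<lambda>xy. \<bar>H (fst xy) (snd xy)\<bar> powr c) (G z))"
      unfolding G_def True hh_j0 by simp
    show ?thesis
      unfolding e1
      using integrable_distr_eq[OF Gm Hm2] integral_distr[OF Gm Hm2] D Hmoments sI tI ts
        int_le_from_Lp[OF Lp_le_Hbound(2)[where M=M and H=H and p=c and X=X, OF finI sI tI not_sym[OF ts]] c0]
      unfolding V_def Hb_def c_def by auto
  next
    case False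
    define g where "g y = \<bar>H (X (e (2 * j)) y) (X (e (2 * j + 1)) y)\<bar> powr c" for y
    have "2 * j \<noteq> p" "2 * j + 1 \<noteq> p" using False unfolding j0_def by auto
    then have XX: "X (e (2 * j)) \<in> measurable T.M2 borel" "X (e (2 * j + 1)) \<in> measurable T.M2 borel"
      using XM2 j by auto
    have gm: "g \<in> borel_measurable T.M2"
    proof -
      have "(\<lambda>y. (X (e (2 * j)) y, X (e (2 * j + 1)) y)) \<in> measurable T.M2 (borel \<Otimes>\<^sub>M borel)"
        using XX by (intro measurable_Pair)
      from measurable_compose[OF this Hm2] show ?thesis unfolding g_def by simp
    qed
    have e1: "(\<lambda>z. \<bar>hh j z\<bar> powr c) = (\<lambda>z. g (snd z))" unfolding g_def using hh_j[OF False] by auto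
    show ?thesis
      unfolding e1 using T.snd_int[OF gm] Hmoments abI[OF j]
        int_le_from_Lp[OF Lp_le_Hbound(1)[where M=M and H=H and p=c and X=X, OF finI abI[OF j]] c0]
      unfolding V_def Hb_def c_def g_def by auto
  qed
  interpret PP: prob_space T.Pm by (rule T.prob_Pm)
  interpret QQ: prob_space T.Qm by (rule T.prob_Qm)
  have hhmP: "hh j \<in> borel_measurable T.Pm" if "j < J" for j
    using hhm[OF that] by (simp add: measurable_cong_sets[OF T.sets_Pm refl])
  have cJ: "c = real J + \<delta>" by (simp add: c_def)
  note PMP = prod_moments[where L=T.Pm and h=hh and J=J and \<delta>=\<delta> and V=V, OF PP.finite_measure_axioms J delta hhmP,
      unfolded cJ[symmetric]]
  note PMQ = prod_moments[where L=T.Qm and h=hh and J=J and \<delta>=\<delta> and V=V, OF QQ.finite_measure_axioms J delta hhm,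
      unfolded cJ[symmetric]]
  have PM1: "integrable T.Pm (\<lambda>x. \<bar>f x\<bar> powr (c / J))" "(\<integral>x. \<bar>f x\<bar> powr (c / J) \<partial>T.Pm) \<le> V"
    "integrable T.Pm f"
    using PMP mPm unfolding f_def by auto
  have QM1: "integrable T.Qm (\<lambda>x. \<bar>f x\<bar> powr (c / J))" "(\<integral>x. \<bar>f x\<bar> powr (c / J) \<partial>T.Qm) \<le> V"
    "integrable T.Qm f"
    using PMQ mQm unfolding f_def by auto
  have EQ: "(\<integral>z. f z \<partial>T.Qm) = 0"
  proof -
    interpret M1: prob_space T.M1 by (rule T.M1_facts(4))
    interpret M2: prob_space T.M2 by (rule T.M2_facts(4))
    interpret PS: pair_sigma_finite T.M1 T.M2 by unfold_locales
    define rest where "rest y = (\<Prod>j\<in>{..<J} - {j0}. H (X (e (2 * j)) y) (X (e (2 * j + 1)) y))" for y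
    have fe: "f (x, y) = H (X s x) (X t y) * rest y" for x y
    proof -
      have "f (x, y) = hh j0 (x, y) * (\<Prod>j\<in>{..<J} - {j0}. hh j (x, y))"
        unfolding f_def using j0J by (simp add: prod.remove)
      also have "(\<Prod>j\<in>{..<J} - {j0}. hh j (x, y)) = rest y"
        unfolding rest_def by (intro prod.cong refl) (auto simp: hh_j)
      finally show ?thesis by (simp add: hh_j0)
    qed
    have fint: "integrable (T.M1 \<Otimes>\<^sub>M T.M2) (case_prod (\<lambda>x y. f (x, y)))"
      using QM1(3) unfolding T.Qm_def by (simp add: case_prod_unfold)
    have inner: "(\<integral>x. f (x, y) \<partial>T.M1) = 0" for y
    proof -
      have hm1: "(\<lambda>x. H (X s x) (X t y)) \<in> borel_measurable T.M1"
      proof -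
        have "(\<lambda>x. (X s x, X t y)) \<in> measurable T.M1 (borel \<Otimes>\<^sub>M borel)"
          using XsM1 by (intro measurable_Pair) auto
        from measurable_compose[OF this Hmeas] show ?thesis by simp
      qed
      have sub: "sets T.M1 \<subseteq> sets M" "space T.M1 = space M" "\<And>A. A \<in> sets T.M1 \<Longrightarrow> emeasure T.M1 A = emeasure M A"
        using g1 by (auto simp: T.M1_facts)
      have "(\<integral>x. f (x, y) \<partial>T.M1) = (\<integral>x. H (X s x) (X t y) \<partial>T.M1) * rest y"
        unfolding fe by simp
      also have "(\<integral>x. H (X s x) (X t y) \<partial>T.M1) = (\<integral>x. H (X s x) (X t y) \<partial>M)"
        by (rule integral_subalgebra[OF hm1 sub])
      also have "\<dots> = 0" using degenerate sI by auto
      finally show ?thesis by simp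
    qed
    have "(\<integral>z. f z \<partial>T.Qm) = (\<integral>y. (\<integral>x. f (x, y) \<partial>T.M1) \<partial>T.M2)"
      using PS.integral_snd[OF fint] unfolding T.Qm_def by (simp add: case_prod_unfold)
    also have "\<dots> = 0" unfolding inner by simp
    finally show ?thesis .
  qed
  have r1: "c / J > 1" using delta J unfolding c_def by (simp add: field_simps)
  have fmP: "f \<in> borel_measurable T.Pm" using fm by (simp add: measurable_cong_sets[OF T.sets_Pm refl])
  have BB: "\<bar>(\<integral>x. f x \<partial>T.Pm) - (\<integral>x. f x \<partial>T.Qm)\<bar> \<le> 2 * V powr (1 / (c / J)) * b powr (1 - 1 / (c / J))"
  proof (rule berbee[OF T.prob_Pm T.prob_Qm T.sets_Pm[symmetric] _ fmP PM1(1) QM1(1) PM1(3) QM1(3) PM1(2) QM1(2) r1])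
    fix C assume "C \<in> sets T.Pm"
    then show "measure T.Pm C - measure T.Qm C \<le> b" unfolding b_def using T.sets_Pm by (intro T.sigma_bound) auto
  qed
  have LHS: "(\<integral>x. f x \<partial>T.Pm) = prob_space.expectation M (\<lambda>\<omega>. \<Prod>j<J. H (X (e (2 * j)) \<omega>) (X (e (2 * j + 1)) \<omega>))"
  proof -
    have "(\<lambda>x. f (x, x)) = (\<lambda>\<omega>. \<Prod>j<J. H (X (e (2 * j)) \<omega>) (X (e (2 * j + 1)) \<omega>))"
      unfolding f_def hh_def Y_def by (intro ext prod.cong refl) simp
    then show ?thesis using T.diag_int(2)[OF fm] by simp
  qed
  have Vp: "V powr (1 / (c / J)) = Hb ^ J"
  proof -
    have "V powr (1 / (c / J)) = Hb powr (c * (1 / (c / J)))" unfolding V_def by (simp add: powr_powr)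
    also have "c * (1 / (c / J)) = real J" using c0 by simp
    also have "Hb powr real J = Hb ^ J"
    proof (cases "Hb = 0")
      case True then show ?thesis using J by simp
    next
      case False then show ?thesis using Hb0 by (simp add: powr_realpow)
    qed
    finally show ?thesis .
  qed
  have ex: "1 - 1 / (c / J) = \<delta> / (real J + \<delta>)" using c0 unfolding c_def by (simp add: field_simps)
  have "b powr (\<delta> / (real J + \<delta>)) \<le> \<beta> 1 (enat (2 * J - 1)) m powr (\<delta> / (real J + \<delta>))"
    using b0 bb delta by (intro powr_mono2) auto
  then have "2 * Hb ^ J * b powr (\<delta> / (real J + \<delta>)) \<le> 2 * Hb ^ J * \<beta> 1 (enat (2 * J - 1)) m powr (\<delta> / (real J + \<delta>))"
    using Hb0 by (intro mult_left_mono) auto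
  then show ?thesis using BB EQ LHS Vp ex unfolding Hb_def c_def by simp
qed


end
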